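(* Within the pseudovariety $\mathsf S$ of all finite semigroups, each of the sets of pseudoidentities $\Sigma=\{(xyx)^\omega=x^\omega,\ x^{\omega+1}=x\}$ and $\Gamma=\{(xy)^\omega x=x\}$ is h-strong.
   Context: $\mathsf S$ is the pseudovariety of finite semigroups (signature: multiplication); $\Omega_A\mathsf S$ is the free profinite semigroup on a finite set $A$. In a profinite semigroup $x^\omega=\lim x^{n!}$ and $x^{\omega+1}=x^\omega x$. An $\mathsf S$-pseudoidentity is $u=v$ with $u,v\in\Omega_B\mathsf S$, $B$ finite; it holds in a finite semigroup $T$ if both sides agree under every continuous homomorphism $\Omega_B\mathsf S\to T$; $[\![\Sigma]\!]$ is the class of finite semigroups satisfying $\Sigma$. Provability: for finite $A$, $\Sigma_0\subseteq\Omega_A\mathsf S\times\Omega_A\mathsf S$ is the set of pairs $(\mathbf t(\varphi(u),w_1,\dots,w_n),\mathbf t(\varphi(v),w_1,\dots,w_n))$ with $u=v$ or $v=u$ in $\Sigma$ ($u,v\in\Omega_B\mathsf S$), $\varphi:\Omega_B\mathsf S\to\Omega_A\mathsf S$ a continuous homomorphism, $\mathbf t$ a semigroup term, $w_i\in\Omega_A\mathsf S$; $\Sigma_{2\alpha+1}$ is the transitive closure of $\Sigma_{2\alpha}$, $\Sigma_{2\alpha+2}$ the topological closure of $\Sigma_{2\alpha+1}$, unions at limit ordinals; $u=v$ is provable from $\Sigma$ if $(u,v)\in\bigcup_\alpha\Sigma_\alpha$. $\Sigma$ is h-strong within $\mathsf S$ if every $\mathsf S$-pseudoidentity valid in $[\![\Sigma]\!]$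 is provable from $\Sigma$. *)

theory Defs
  imports "HOL-Analysis.Analysis" "HOL-Library.FuncSet"
begin

text \<open>Every finite semigroup is isomorphic to one whose carrier is a subset of nat,
  so finite semigroups are represented as pairs (carrier, multiplication).\<close>

type_synonym fsg = "nat set \<times> (nat \<Rightarrow> nat \<Rightarrow> nat)"

definition fin_sg :: "fsg \<Rightarrow> bool" where
  "fin_sg S \<longleftrightarrow> finite (fst S)
     \<and> (\<forall>x\<in>fst S. \<forall>y\<in>fst S. snd S x y \<in> fst S)
     \<and> (\<forall>x\<in>fst S. \<forall>y\<in>fst S. \<forall>z\<in>fst S. snd S (snd S x y) z = snd S x (snd S y z))"

definition sg_hom :: "fsg \<Rightarrow> fsg \<Rightarrow> (nat \<Rightarrow> nat) \<Rightarrow> bool" where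
  "sg_hom S T h \<longleftrightarrow> (\<forall>x\<in>fst S. h x \<in> fst T)
     \<and> (\<forall>x\<in>fst S. \<forall>y\<in>fst S. h (snd S x y) = snd T (h x) (h y))"

text \<open>An element of the free profinite semigroup over A (an A-ary implicit operation on S):
  for each finite semigroup S and each assignment A \<rightarrow> S, an element of S,
  natural with respect to all semigroup homomorphisms.\<close>

type_synonym 'a pw = "fsg \<Rightarrow> ('a \<Rightarrow> nat) \<Rightarrow> nat"

definition adm :: "'a set \<Rightarrow> fsg \<Rightarrow> ('a \<Rightarrow> nat) \<Rightarrow> bool" where
  "adm A S \<phi> \<longleftrightarrow> fin_sg S \<and> \<phi> \<in> A \<rightarrow>\<^sub>E fst S"

definition Omega :: "'a set \<Rightarrow> 'a pw set" where
  "Omega A = {w. (\<forall>S \<phi>. adm A S \<phi> \<longrightarrow> w S \<phi> \<in> fst S)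
      \<and> (\<forall>S \<phi>. \<not> adm A S \<phi> \<longrightarrow> w S \<phi> = 0)
      \<and> (\<forall>S T h \<phi>. adm A S \<phi> \<and> fin_sg T \<and> sg_hom S T h
            \<longrightarrow> h (w S \<phi>) = w T (restrict (h \<circ> \<phi>) A))}"

definition pmul :: "'a set \<Rightarrow> 'a pw \<Rightarrow> 'a pw \<Rightarrow> 'a pw" where
  "pmul A u v = (\<lambda>S \<phi>. if adm A S \<phi> then snd S (u S \<phi>) (v S \<phi>) else 0)"

definition gen :: "'a set \<Rightarrow> 'a \<Rightarrow> 'a pw" where
  "gen A a = (\<lambda>S \<phi>. if adm A S \<phi> then \<phi> a else 0)"

text \<open>Profinite topology: the coarsest topology making all evaluation maps
  (i.e. all continuous homomorphisms into finite discrete semigroups) continuous.\<close>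

definition omega_top :: "'a set \<Rightarrow> 'a pw topology" where
  "omega_top A = topology_generated_by
     (insert (Omega A) {{w \<in> Omega A. w S \<phi> = c} | S \<phi> c. adm A S \<phi>})"

text \<open>ppow A u n = u^(n+1)\<close>
fun ppow :: "'a set \<Rightarrow> 'a pw \<Rightarrow> nat \<Rightarrow> 'a pw" where
  "ppow A u 0 = u"
| "ppow A u (Suc n) = pmul A (ppow A u n) u"

definition omega :: "'a set \<Rightarrow> 'a pw \<Rightarrow> 'a pw" where
  "omega A u = (THE w. limitin (omega_top A) (\<lambda>n. ppow A u (fact n - 1)) w sequentially)"

definition cont_hom :: "'b set \<Rightarrow> 'a set \<Rightarrow> ('b pw \<Rightarrow> 'a pw) \<Rightarrow> bool" where
  "cont_hom B A f \<longleftrightarrow> f \<in> Omega B \<rightarrow> Omega A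
     \<and> continuous_map (omega_top B) (omega_top A) f
     \<and> (\<forall>u\<in>Omega B. \<forall>v\<in>Omega B. f (pmul B u v) = pmul A (f u) (f v))"

text \<open>A pseudoidentity is (B, u, v) with u, v in Omega B.\<close>

definition holds_in :: "fsg \<Rightarrow> 'b set \<Rightarrow> 'b pw \<Rightarrow> 'b pw \<Rightarrow> bool" where
  "holds_in T B u v \<longleftrightarrow>
     (\<forall>h. h \<in> Omega B \<rightarrow> fst T
        \<and> continuous_map (omega_top B) (discrete_topology (fst T)) h
        \<and> (\<forall>x\<in>Omega B. \<forall>y\<in>Omega B. h (pmul B x y) = snd T (h x) (h y))
        \<longrightarrow> h u = h v)"

definition models :: "fsg \<Rightarrow> ('b set \<times> 'b pw \<times> 'b pw) set \<Rightarrow> bool" where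
  "models T \<Sigma> \<longleftrightarrow> fin_sg T \<and> (\<forall>(B, u, v) \<in> \<Sigma>. holds_in T B u v)"

datatype sg_term = TVar nat | TMul sg_term sg_term

fun teval :: "'a set \<Rightarrow> (nat \<Rightarrow> 'a pw) \<Rightarrow> sg_term \<Rightarrow> 'a pw" where
  "teval A \<rho> (TVar i) = \<rho> i"
| "teval A \<rho> (TMul s t) = pmul A (teval A \<rho> s) (teval A \<rho> t)"

text \<open>Sigma_0: instances t(phi(u), w_1, ..., w_n) = t(phi(v), w_1, ..., w_n); variable 0
  of the term t is the distinguished one, the others receive the w_i.\<close>

definition Sigma0 :: "('b set \<times> 'b pw \<times> 'b pw) set \<Rightarrow> 'a set \<Rightarrow> ('a pw \<times> 'a pw) set" where
  "Sigma0 \<Sigma> A = {(teval A (\<rho>(0 := f u)) t, teval A (\<rho>(0 := f v)) t) | B u v f \<rho> t.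
      ((B, u, v) \<in> \<Sigma> \<or> (B, v, u) \<in> \<Sigma>) \<and> cont_hom B A f \<and> (\<forall>i. \<rho> i \<in> Omega A)}"

text \<open>The union of the transfinite chain (alternating transitive and topological closure)
  is the least relation containing Sigma_0 that is transitive and topologically closed.\<close>

definition provable_rel :: "('b set \<times> 'b pw \<times> 'b pw) set \<Rightarrow> 'a set \<Rightarrow> ('a pw \<times> 'a pw) set" where
  "provable_rel \<Sigma> A = \<Inter>{R. Sigma0 \<Sigma> A \<subseteq> R \<and> trans R
      \<and> (prod_topology (omega_top A) (omega_top A)) closure_of R \<subseteq> R}"

definition h_strong :: "('b set \<times> 'b pw \<times> 'b pw) set \<Rightarrow> bool" where
  "h_strong \<Sigma> \<longleftrightarrow> (\<forall>(A :: nat set) u v. finite A \<and> u \<in> Omega A \<and> v \<in> Omega A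
       \<and> (\<forall>T. models T \<Sigma> \<longrightarrow> holds_in T A u v)
       \<longrightarrow> (u, v) \<in> provable_rel \<Sigma> A)"

definition Bxy :: "nat set" where "Bxy = {0, 1}"

definition SigmaPI :: "(nat set \<times> nat pw \<times> nat pw) set" where
  "SigmaPI = (let x = gen Bxy 0; y = gen Bxy 1 in
     {(Bxy, omega Bxy (pmul Bxy (pmul Bxy x y) x), omega Bxy x),
      (Bxy, pmul Bxy (omega Bxy x) x, x)})"

definition GammaPI :: "(nat set \<times> nat pw \<times> nat pw) set" where
  "GammaPI = (let x = gen Bxy 0; y = gen Bxy 1 in
     {(Bxy, pmul Bxy (omega Bxy (pmul Bxy x y)) x, x)})"

end

theory Submission
  imports Defs "HOL-Library.Nat_Bijection"
begin



lemma OmegaD: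
  assumes "w \<in> Omega A"
  shows "adm A S \<phi> \<Longrightarrow> w S \<phi> \<in> fst S"
    and "\<not> adm A S \<phi> \<Longrightarrow> w S \<phi> = 0"
    and "adm A S \<phi> \<Longrightarrow> fin_sg T \<Longrightarrow> sg_hom S T h \<Longrightarrow> h (w S \<phi>) = w T (restrict (h \<circ> \<phi>) A)"
  using assms unfolding Omega_def by blast+

lemma topspace_omega [simp]: "topspace (omega_top A) = Omega A"
  unfolding omega_top_def by auto

lemma openin_basic:
  assumes "adm A S \<phi>"
  shows "openin (omega_top A) {w \<in> Omega A. w S \<phi> = c}"
  unfolding omega_top_def
  by (rule topology_generated_by_Basis) (use assms in blast)

lemma openin_Omega: "openin (omega_top A) (Omega A)"
  by (metis openin_topspace topspace_omega)

lemma Omega_eqI: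
  assumes "u \<in> Omega A" "v \<in> Omega A" "\<And>S \<phi>. adm A S \<phi> \<Longrightarrow> u S \<phi> = v S \<phi>"
  shows "u = v"
proof (rule ext, rule ext)
  fix S \<phi> show "u S \<phi> = v S \<phi>"
    using assms OmegaD(2)[OF assms(1)] OmegaD(2)[OF assms(2)] by (cases "adm A S \<phi>") auto
qed

lemma adm_restrict_hom:
  assumes "adm A S \<phi>" "fin_sg T" "sg_hom S T h"
  shows "adm A T (restrict (h \<circ> \<phi>) A)"
  using assms unfolding adm_def sg_hom_def by (auto simp: PiE_def Pi_def)

lemma fin_sgD:
  assumes "fin_sg S"
  shows "finite (fst S)" "x \<in> fst S \<Longrightarrow> y \<in> fst S \<Longrightarrow> snd S x y \<in> fst S"
    "x \<in> fst S \<Longrightarrow> y \<in> fst S \<Longrightarrow> z \<in> fst S \<Longrightarrow> snd S (snd S x y) z = snd S x (snd S y z)"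
  using assms unfolding fin_sg_def by blast+

lemma admD: assumes "adm A S \<phi>" shows "fin_sg S" "\<phi> \<in> A \<rightarrow>\<^sub>E fst S"
  using assms unfolding adm_def by auto

lemma pmul_adm: "adm A S \<phi> \<Longrightarrow> pmul A u v S \<phi> = snd S (u S \<phi>) (v S \<phi>)"
  by (simp add: pmul_def)

lemma pmul_Omega:
  assumes "u \<in> Omega A" "v \<in> Omega A"
  shows "pmul A u v \<in> Omega A"
proof -
  have "\<forall>S \<phi>. adm A S \<phi> \<longrightarrow> pmul A u v S \<phi> \<in> fst S"
  proof (intro allI impI)
    fix S \<phi> assume a: "adm A S \<phi>"
    show "pmul A u v S \<phi> \<in> fst S"
      using fin_sgD(2)[OF admD(1)[OF a] OmegaD(1)[OF assms(1) a] OmegaD(1)[OF assms(2) a]]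
      by (simp add: pmul_adm a)
  qed
  moreover have "\<forall>S \<phi>. \<not> adm A S \<phi> \<longrightarrow> pmul A u v S \<phi> = 0" by (simp add: pmul_def)
  moreover have "h (pmul A u v S \<phi>) = pmul A u v T (restrict (h \<circ> \<phi>) A)"
    if "adm A S \<phi>" "fin_sg T" "sg_hom S T h" for S T h \<phi>
  proof -
    have a: "adm A T (restrict (h \<circ> \<phi>) A)" using adm_restrict_hom that by blast
    have "h (pmul A u v S \<phi>) = snd T (h (u S \<phi>)) (h (v S \<phi>))"
      using that OmegaD(1)[OF assms(1) that(1)] OmegaD(1)[OF assms(2) that(1)]
      by (simp add: pmul_def sg_hom_def)
    also have "\<dots> = pmul A u v T (restrict (h \<circ> \<phi>) A)"
      using a that by (simp add: pmul_def OmegaD(3)[OF assms(1)] OmegaD(3)[OF assms(2)])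
    finally show ?thesis .
  qed
  ultimately show ?thesis unfolding Omega_def by blast
qed


lemma pmul_assoc:
  assumes "u \<in> Omega A" "v \<in> Omega A" "w \<in> Omega A"
  shows "pmul A (pmul A u v) w = pmul A u (pmul A v w)"
proof (rule Omega_eqI[where A=A])
  show "pmul A (pmul A u v) w \<in> Omega A" "pmul A u (pmul A v w) \<in> Omega A"
    using assms by (auto intro: pmul_Omega)
  fix S \<phi> assume a: "adm A S \<phi>"
  show "pmul A (pmul A u v) w S \<phi> = pmul A u (pmul A v w) S \<phi>"
    using fin_sgD(3)[OF admD(1)[OF a] OmegaD(1)[OF assms(1) a] OmegaD(1)[OF assms(2) a] OmegaD(1)[OF assms(3) a]]
    by (simp add: pmul_adm a)
qed

lemma gen_Omega:
  assumes "a \<in> A" shows "gen A a \<in> Omega A"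
  unfolding Omega_def
proof (intro CollectI conjI allI impI)
  fix S \<phi> assume "adm A S \<phi>" then show "gen A a S \<phi> \<in> fst S"
    using assms by (auto simp: gen_def adm_def)
next
  fix S \<phi> assume "\<not> adm A S \<phi>" then show "gen A a S \<phi> = 0" by (simp add: gen_def)
next
  fix S T h \<phi> assume a: "adm A S \<phi> \<and> fin_sg T \<and> sg_hom S T h"
  then have "adm A T (restrict (h \<circ> \<phi>) A)" using adm_restrict_hom by blast
  then show "h (gen A a S \<phi>) = gen A a T (restrict (h \<circ> \<phi>) A)"
    using a assms by (simp add: gen_def)
qed

lemma gen_adm: "adm A S \<phi> \<Longrightarrow> gen A a S \<phi> = \<phi> a"
  by (simp add: gen_def)

definition prodS :: "fsg \<Rightarrow> fsg \<Rightarrow> fsg" where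
  "prodS S1 S2 = (prod_encode ` (fst S1 \<times> fst S2),
     \<lambda>x y. prod_encode (snd S1 (fst (prod_decode x)) (fst (prod_decode y)),
                        snd S2 (snd (prod_decode x)) (snd (prod_decode y))))"

lemma fin_sg_prodS:
  assumes "fin_sg S1" "fin_sg S2" shows "fin_sg (prodS S1 S2)"
  using assms unfolding fin_sg_def prodS_def by auto

lemma sg_hom_p1:
  assumes "fin_sg S1" "fin_sg S2" shows "sg_hom (prodS S1 S2) S1 (\<lambda>x. fst (prod_decode x))"
  using assms unfolding sg_hom_def prodS_def by auto

lemma sg_hom_p2:
  assumes "fin_sg S1" "fin_sg S2" shows "sg_hom (prodS S1 S2) S2 (\<lambda>x. snd (prod_decode x))"
  using assms unfolding sg_hom_def prodS_def by auto

definition refn :: "'a set \<Rightarrow> fsg \<Rightarrow> ('a \<Rightarrow> nat) \<Rightarrow> fsg \<Rightarrow> ('a \<Rightarrow> nat) \<Rightarrow> bool" where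
  "refn A S \<phi> S' \<phi>' \<longleftrightarrow> (\<forall>x\<in>Omega A. \<forall>y\<in>Omega A. x S \<phi> = y S \<phi> \<longrightarrow> x S' \<phi>' = y S' \<phi>')"

lemma refn_refl: "refn A S \<phi> S \<phi>" by (simp add: refn_def)

lemma refn_trans: "refn A S \<phi> S' \<phi>' \<Longrightarrow> refn A S' \<phi>' S'' \<phi>'' \<Longrightarrow> refn A S \<phi> S'' \<phi>''"
  by (simp add: refn_def)

lemma prod_refn:
  assumes "adm A S1 \<phi>1" "adm A S2 \<phi>2"
  shows "\<exists>S \<phi>. adm A S \<phi> \<and> refn A S \<phi> S1 \<phi>1 \<and> refn A S \<phi> S2 \<phi>2"
proof -
  let ?S = "prodS S1 S2"
  let ?\<phi> = "restrict (\<lambda>a. prod_encode (\<phi>1 a, \<phi>2 a)) A"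
  have f1: "fin_sg S1" "fin_sg S2" using admD(1)[OF assms(1)] admD(1)[OF assms(2)] by auto
  have adm: "adm A ?S ?\<phi>" using assms fin_sg_prodS[OF f1] unfolding adm_def prodS_def by (auto simp: PiE_def Pi_def)
  have r1: "restrict ((\<lambda>x. fst (prod_decode x)) \<circ> ?\<phi>) A = \<phi>1"
    using admD(2)[OF assms(1)] by (auto simp: PiE_def extensional_def)
  have r2: "restrict ((\<lambda>x. snd (prod_decode x)) \<circ> ?\<phi>) A = \<phi>2"
    using admD(2)[OF assms(2)] by (auto simp: PiE_def extensional_def)
  have "refn A ?S ?\<phi> S1 \<phi>1"
    unfolding refn_def
    using OmegaD(3)[OF _ adm f1(1) sg_hom_p1[OF f1]] r1 by metis
  moreover have "refn A ?S ?\<phi> S2 \<phi>2"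
    unfolding refn_def
    using OmegaD(3)[OF _ adm f1(2) sg_hom_p2[OF f1]] r2 by metis
  ultimately show ?thesis using adm by blast
qed

definition trivS :: fsg where "trivS = ({0}, \<lambda>x y. 0)"

lemma adm_triv: "adm A trivS (restrict (\<lambda>_. 0) A)"
  unfolding adm_def trivS_def fin_sg_def by auto

lemma base_gen:
  assumes "generate_topology_on (insert (Omega A) {{w \<in> Omega A. w S \<phi> = c} | S \<phi> c. adm A S \<phi>}) U"
    "w \<in> U" "w \<in> Omega A"
  shows "\<exists>S \<phi>. adm A S \<phi> \<and> {x \<in> Omega A. x S \<phi> = w S \<phi>} \<subseteq> U"
  using assms
proof (induction arbitrary: w rule: generate_topology_on.induct)
  case Empty then show ?case by simp
next
  case (Int a b)
  from Int.IH(1)[of w] Int.IH(2)[of w] Int.prems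
  obtain S1 \<phi>1 S2 \<phi>2 where h: "adm A S1 \<phi>1" "{x \<in> Omega A. x S1 \<phi>1 = w S1 \<phi>1} \<subseteq> a"
      "adm A S2 \<phi>2" "{x \<in> Omega A. x S2 \<phi>2 = w S2 \<phi>2} \<subseteq> b" by auto
  from prod_refn[OF h(1) h(3)] obtain S \<phi> where
    r: "adm A S \<phi>" "refn A S \<phi> S1 \<phi>1" "refn A S \<phi> S2 \<phi>2" by blast
  have "{x \<in> Omega A. x S \<phi> = w S \<phi>} \<subseteq> a \<inter> b"
    using r h Int.prems unfolding refn_def by blast
  then show ?case using r by blast
next
  case (UN K)
  then obtain k where "k \<in> K" "w \<in> k" by blast
  with UN.IH[of k w] UN.prems show ?case by blast
next
  case (Basis s)
  have "s = Omega A \<or> s \<in> {{w \<in> Omega A. w S \<phi> = c} | S \<phi> c. adm A S \<phi>}"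
    using Basis.hyps by blast
  then show ?case
  proof
    assume "s = Omega A" then show ?thesis using adm_triv by blast
  next
    assume "s \<in> {{w \<in> Omega A. w S \<phi> = c} | S \<phi> c. adm A S \<phi>}"
    then obtain S \<phi> c where "s = {w \<in> Omega A. w S \<phi> = c}" "adm A S \<phi>" by blast
    then show ?thesis using Basis.prems by blast
  qed
qed

lemma base:
  assumes "openin (omega_top A) U" "w \<in> U"
  shows "\<exists>S \<phi>. adm A S \<phi> \<and> {x \<in> Omega A. x S \<phi> = w S \<phi>} \<subseteq> U"
proof -
  have g: "generate_topology_on (insert (Omega A) {{w \<in> Omega A. w S \<phi> = c} | S \<phi> c. adm A S \<phi>}) U"
    using assms(1) unfolding omega_top_def by (rule openin_topology_generated_by)
  have "U \<subseteq> Omega A" using openin_subset[OF assms(1)] by simp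
  then show ?thesis using base_gen[OF g assms(2)] assms(2) by blast
qed




section \<open>Words and density\<close>

inductive_set words :: "'a set \<Rightarrow> 'a pw set" for A where
  wgen: "a \<in> A \<Longrightarrow> gen A a \<in> words A"
| wmul: "x \<in> words A \<Longrightarrow> y \<in> words A \<Longrightarrow> pmul A x y \<in> words A"

lemma words_Omega: "t \<in> words A \<Longrightarrow> t \<in> Omega A"
  by (induction rule: words.induct) (auto intro: gen_Omega pmul_Omega)

inductive_set gsub :: "fsg \<Rightarrow> nat set \<Rightarrow> nat set" for S X where
  ginc: "x \<in> X \<Longrightarrow> x \<in> gsub S X"
| gmul: "x \<in> gsub S X \<Longrightarrow> y \<in> gsub S X \<Longrightarrow> snd S x y \<in> gsub S X"

lemma gsub_sub: "fin_sg S \<Longrightarrow> X \<subseteq> fst S \<Longrightarrow> gsub S X \<subseteq> fst S"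
proof
  fix x assume a: "fin_sg S" "X \<subseteq> fst S" and x: "x \<in> gsub S X"
  from x show "x \<in> fst S" by (induction rule: gsub.induct) (use a in \<open>auto intro: fin_sgD(2)\<close>)
qed

lemma fin_sg_gsub:
  assumes "fin_sg S" "X \<subseteq> fst S"
  shows "fin_sg (gsub S X, snd S)"
proof -
  have s: "gsub S X \<subseteq> fst S" by (rule gsub_sub[OF assms])
  have "finite (gsub S X)" using finite_subset[OF s fin_sgD(1)[OF assms(1)]] .
  moreover have "\<forall>x\<in>gsub S X. \<forall>y\<in>gsub S X. \<forall>z\<in>gsub S X. snd S (snd S x y) z = snd S x (snd S y z)"
    using s fin_sgD(3)[OF assms(1)] by (meson subsetD)
  ultimately show ?thesis unfolding fin_sg_def
    by (auto intro: gsub.gmul)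
qed

lemma gsub_words:
  assumes "adm A S \<phi>" "c \<in> gsub S (\<phi> ` A)"
  shows "\<exists>t\<in>words A. t S \<phi> = c"
  using assms(2)
proof (induction rule: gsub.induct)
  case (ginc x)
  then obtain a where "a \<in> A" "x = \<phi> a" by blast
  then show ?case using assms(1) by (intro bexI[of _ "gen A a"]) (auto simp: gen_adm intro: wgen)
next
  case (gmul x y)
  then obtain t1 t2 where "t1 \<in> words A" "t1 S \<phi> = x" "t2 \<in> words A" "t2 S \<phi> = y" by blast
  then show ?case using assms(1) by (intro bexI[of _ "pmul A t1 t2"]) (auto simp: pmul_adm intro: wmul)
qed

lemma dense:
  assumes "w \<in> Omega A" "adm A S \<phi>"
  shows "\<exists>t\<in>words A. t S \<phi> = w S \<phi>"
proof -
  let ?G = "gsub S (\<phi> ` A)"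
  have fs: "fin_sg S" and ph: "\<phi> \<in> A \<rightarrow>\<^sub>E fst S" using admD[OF assms(2)] by auto
  have sub: "\<phi> ` A \<subseteq> fst S" using ph by auto
  have f': "fin_sg (?G, snd S)" by (rule fin_sg_gsub[OF fs sub])
  have a': "adm A (?G, snd S) \<phi>" using f' ph unfolding adm_def by (auto intro: gsub.ginc)
  have h: "sg_hom (?G, snd S) S id" unfolding sg_hom_def using gsub_sub[OF fs sub] by auto
  have "id (w (?G, snd S) \<phi>) = w S (restrict (id \<circ> \<phi>) A)"
    by (rule OmegaD(3)[OF assms(1) a' fs h])
  moreover have "restrict (id \<circ> \<phi>) A = \<phi>" using ph by (auto simp: PiE_def extensional_def)
  ultimately have eq: "w (?G, snd S) \<phi> = w S \<phi>" by simp
  have "w (?G, snd S) \<phi> \<in> ?G" using OmegaD(1)[OF assms(1) a'] by simp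
  then show ?thesis using gsub_words[OF assms(2)] eq by metis
qed

definition sat :: "'a set \<Rightarrow> fsg \<Rightarrow> ('a \<Rightarrow> nat) \<Rightarrow> 'a pw set \<Rightarrow> bool" where
  "sat A S \<phi> C \<longleftrightarrow> C \<subseteq> Omega A \<and> (\<forall>x\<in>C. \<forall>y\<in>Omega A. y S \<phi> = x S \<phi> \<longrightarrow> y \<in> C)"

lemma sat_open:
  assumes "adm A S \<phi>" "sat A S \<phi> C"
  shows "openin (omega_top A) C"
proof -
  have Cs: "C \<subseteq> Omega A" and Cc: "\<And>x y. x \<in> C \<Longrightarrow> y \<in> Omega A \<Longrightarrow> y S \<phi> = x S \<phi> \<Longrightarrow> y \<in> C"
    using assms(2) unfolding sat_def by blast+
  have "C = (\<Union>x\<in>C. {y \<in> Omega A. y S \<phi> = x S \<phi>})"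
  proof
    show "C \<subseteq> (\<Union>x\<in>C. {y \<in> Omega A. y S \<phi> = x S \<phi>})" using Cs by blast
    show "(\<Union>x\<in>C. {y \<in> Omega A. y S \<phi> = x S \<phi>}) \<subseteq> C" using Cc by blast
  qed
  moreover have "openin (omega_top A) (\<Union>x\<in>C. {y \<in> Omega A. y S \<phi> = x S \<phi>})"
    using openin_basic[OF assms(1)] by (intro openin_Union) auto
  ultimately show ?thesis by simp
qed

lemma sat_closed:
  assumes "adm A S \<phi>" "sat A S \<phi> C"
  shows "closedin (omega_top A) C"
proof -
  have Cs: "C \<subseteq> Omega A" and Cc: "\<And>x y. x \<in> C \<Longrightarrow> y \<in> Omega A \<Longrightarrow> y S \<phi> = x S \<phi> \<Longrightarrow> y \<in> C"
    using assms(2) unfolding sat_def by blast+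
  have "sat A S \<phi> (Omega A - C)" unfolding sat_def
  proof (intro conjI ballI impI)
    show "Omega A - C \<subseteq> Omega A" by blast
    fix x y assume x: "x \<in> Omega A - C" and y: "y \<in> Omega A" and e: "y S \<phi> = x S \<phi>"
    have "y \<notin> C"
    proof
      assume "y \<in> C" then have "x \<in> C" using Cc[of y x] x e by simp
      then show False using x by blast
    qed
    then show "y \<in> Omega A - C" using y by blast
  qed
  then have "openin (omega_top A) (Omega A - C)" by (rule sat_open[OF assms(1)])
  then show ?thesis using Cs by (intro closedin_def[THEN iffD2] conjI) auto
qed

lemma cont_disc:
  assumes "adm A S \<phi>" "g \<in> Omega A \<rightarrow> Y"
    "\<And>x y. x \<in> Omega A \<Longrightarrow> y \<in> Omega A \<Longrightarrow> x S \<phi> = y S \<phi> \<Longrightarrow> g x = g y"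
  shows "continuous_map (omega_top A) (discrete_topology Y) g"
  unfolding continuous_map_def
proof (intro conjI allI impI)
  show "g \<in> topspace (omega_top A) \<rightarrow> topspace (discrete_topology Y)" using assms(2) by simp
  fix U assume "openin (discrete_topology Y) U"
  have "sat A S \<phi> {x \<in> topspace (omega_top A). g x \<in> U}"
    unfolding sat_def
  proof (intro conjI ballI impI)
    show "{x \<in> topspace (omega_top A). g x \<in> U} \<subseteq> Omega A" by auto
    fix x y assume "x \<in> {x \<in> topspace (omega_top A). g x \<in> U}" "y \<in> Omega A" "y S \<phi> = x S \<phi>"
    then show "y \<in> {x \<in> topspace (omega_top A). g x \<in> U}" using assms(3)[of y x] by auto
  qed
  then show "openin (omega_top A) {x \<in> topspace (omega_top A). g x \<in> U}"
    by (rule sat_open[OF assms(1)])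
qed

lemma ev_cont:
  assumes "adm A S \<phi>"
  shows "continuous_map (omega_top A) (discrete_topology (fst S)) (\<lambda>w. w S \<phi>)"
proof (rule cont_disc[OF assms])
  show "(\<lambda>w. w S \<phi>) \<in> Omega A \<rightarrow> fst S" using OmegaD(1)[OF _ assms] by blast
qed

lemma hom_ev:
  assumes T: "fin_sg T" and hT: "h \<in> Omega A \<rightarrow> fst T"
    and hc: "continuous_map (omega_top A) (discrete_topology (fst T)) h"
    and hm: "\<forall>x\<in>Omega A. \<forall>y\<in>Omega A. h (pmul A x y) = snd T (h x) (h y)"
    and w: "w \<in> Omega A"
  shows "h w = w T (restrict (h \<circ> gen A) A)"
proof -
  define psi where "psi = restrict (h \<circ> gen A) A"
  let ?\<psi> = psi
  have "h (gen A a) \<in> fst T" if "a \<in> A" for a using hT gen_Omega[OF that] by auto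
  then have aT: "adm A T ?\<psi>" using T unfolding adm_def psi_def by (auto simp: PiE_def Pi_def)
  have wt: "h t = t T ?\<psi>" if "t \<in> words A" for t
    using that
  proof (induction rule: words.induct)
    case (wgen a)
    have "gen A a T ?\<psi> = ?\<psi> a" by (rule gen_adm[OF aT])
    moreover have "psi a = h (gen A a)" using wgen by (simp add: psi_def)
    ultimately show ?case by simp
  next
    case (wmul x y)
    have "h (pmul A x y) = snd T (h x) (h y)" using hm words_Omega[OF wmul(1)] words_Omega[OF wmul(2)] by blast
    then show ?case using aT wmul by (simp add: pmul_adm)
  qed
  have "h w \<in> fst T" using hT w by blast
  then have "{h w} \<subseteq> fst T" by simp
  then have "openin (omega_top A) {x \<in> topspace (omega_top A). h x \<in> {h w}}"
    using hc unfolding continuous_map_def openin_discrete_topology by blast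
  moreover have "{x \<in> topspace (omega_top A). h x \<in> {h w}} = {x \<in> Omega A. h x = h w}" by auto
  ultimately have o: "openin (omega_top A) {x \<in> Omega A. h x = h w}" by simp
  obtain S \<phi> where S: "adm A S \<phi>" "{x \<in> Omega A. x S \<phi> = w S \<phi>} \<subseteq> {x \<in> Omega A. h x = h w}"
    using base[OF o] w by blast
  obtain S2 \<phi>2 where S2: "adm A S2 \<phi>2" "refn A S2 \<phi>2 S \<phi>" "refn A S2 \<phi>2 T ?\<psi>"
    using prod_refn[OF S(1) aT] by blast
  obtain t where t: "t \<in> words A" "t S2 \<phi>2 = w S2 \<phi>2" using dense[OF w S2(1)] by blast
  have tO: "t \<in> Omega A" using words_Omega[OF t(1)] .
  have "t S \<phi> = w S \<phi>" using S2(2) t tO w unfolding refn_def by blast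
  then have "h t = h w" using S(2) tO by blast
  moreover have "t T ?\<psi> = w T ?\<psi>" using S2(3) t tO w unfolding refn_def by blast
  ultimately show ?thesis using wt[OF t(1)] by (simp add: psi_def)
qed

lemma cont_into:
  assumes "f \<in> topspace X \<rightarrow> Omega A"
    "\<And>S \<phi> c. adm A S \<phi> \<Longrightarrow> openin X {x \<in> topspace X. f x S \<phi> = c}"
  shows "continuous_map X (omega_top A) f"
  unfolding omega_top_def
proof (rule continuous_on_generated_topo)
  fix U assume "U \<in> insert (Omega A) {{w \<in> Omega A. w S \<phi> = c} |S \<phi> c. adm A S \<phi>}"
  then have "U = Omega A \<or> (\<exists>S \<phi> c. U = {w \<in> Omega A. w S \<phi> = c} \<and> adm A S \<phi>)" by blast
  then show "openin X (f -` U \<inter> topspace X)"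
  proof
    assume "U = Omega A"
    then have "f -` U \<inter> topspace X = topspace X" using assms(1) by auto
    then show ?thesis by simp
  next
    assume "\<exists>S \<phi> c. U = {w \<in> Omega A. w S \<phi> = c} \<and> adm A S \<phi>"
    then obtain S \<phi> c where U: "U = {w \<in> Omega A. w S \<phi> = c}" "adm A S \<phi>" by blast
    then have "f -` U \<inter> topspace X = {x \<in> topspace X. f x S \<phi> = c}" using assms(1) by auto
    then show ?thesis using assms(2)[OF U(2)] by simp
  qed
next
  have "\<Union> (insert (Omega A) {{w \<in> Omega A. w S \<phi> = c} |S \<phi> c. adm A S \<phi>}) = Omega A" by auto
  then show "f ` topspace X \<subseteq> \<Union> (insert (Omega A) {{w \<in> Omega A. w S \<phi> = c} |S \<phi> c. adm A S \<phi>})"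
    using assms(1) by auto
qed

lemma lmul_cont:
  assumes "c \<in> Omega A"
  shows "continuous_map (omega_top A) (omega_top A) (pmul A c)"
proof (rule cont_into)
  show "pmul A c \<in> topspace (omega_top A) \<rightarrow> Omega A" using assms pmul_Omega by auto
  fix S \<phi> d assume a: "adm A S \<phi>"
  have "sat A S \<phi> {x \<in> topspace (omega_top A). pmul A c x S \<phi> = d}"
    unfolding sat_def using a by (auto simp: pmul_adm)
  then show "openin (omega_top A) {x \<in> topspace (omega_top A). pmul A c x S \<phi> = d}"
    by (rule sat_open[OF a])
qed

lemma rmul_cont:
  assumes "c \<in> Omega A"
  shows "continuous_map (omega_top A) (omega_top A) (\<lambda>x. pmul A x c)"
proof (rule cont_into)
  show "(\<lambda>x. pmul A x c) \<in> topspace (omega_top A) \<rightarrow> Omega A" using assms pmul_Omega by auto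
  fix S \<phi> d assume a: "adm A S \<phi>"
  have "sat A S \<phi> {x \<in> topspace (omega_top A). pmul A x c S \<phi> = d}"
    unfolding sat_def using a by (auto simp: pmul_adm)
  then show "openin (omega_top A) {x \<in> topspace (omega_top A). pmul A x c S \<phi> = d}"
    by (rule sat_open[OF a])
qed

lemma Hausdorff_omega: "Hausdorff_space (omega_top A)"
  unfolding Hausdorff_space_def
proof (intro allI impI)
  fix x y assume "x \<in> topspace (omega_top A) \<and> y \<in> topspace (omega_top A) \<and> x \<noteq> y"
  then have xy: "x \<in> Omega A" "y \<in> Omega A" "x \<noteq> y" by auto
  have "\<exists>S \<phi>. adm A S \<phi> \<and> x S \<phi> \<noteq> y S \<phi>"
  proof (rule ccontr)
    assume "\<not> ?thesis"
    then have "x = y" using Omega_eqI[OF xy(1) xy(2)] by blast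
    then show False using xy(3) by simp
  qed
  then obtain S \<phi> where a: "adm A S \<phi>" "x S \<phi> \<noteq> y S \<phi>" by blast
  show "\<exists>U V. openin (omega_top A) U \<and> openin (omega_top A) V \<and> x \<in> U \<and> y \<in> V \<and> disjnt U V"
  proof (intro exI conjI)
    show "openin (omega_top A) {w \<in> Omega A. w S \<phi> = x S \<phi>}" "openin (omega_top A) {w \<in> Omega A. w S \<phi> = y S \<phi>}"
      using openin_basic[OF a(1)] by auto
    show "x \<in> {w \<in> Omega A. w S \<phi> = x S \<phi>}" "y \<in> {w \<in> Omega A. w S \<phi> = y S \<phi>}" using xy by auto
    show "disjnt {w \<in> Omega A. w S \<phi> = x S \<phi>} {w \<in> Omega A. w S \<phi> = y S \<phi>}"
      using a(2) by (auto simp: disjnt_def)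
  qed
qed




section \<open>Compactness\<close>

definition Idx :: "'a set \<Rightarrow> (fsg \<times> ('a \<Rightarrow> nat)) set" where
  "Idx A = {p. adm A (fst p) (snd p)}"

definition PT :: "'a set \<Rightarrow> (fsg \<times> ('a \<Rightarrow> nat) \<Rightarrow> nat) topology" where
  "PT A = product_topology (\<lambda>i. discrete_topology (fst (fst i))) (Idx A)"

definition natC :: "'a set \<Rightarrow> (fsg \<times> ('a \<Rightarrow> nat) \<Rightarrow> nat) set" where
  "natC A = {p \<in> topspace (PT A). \<forall>S \<phi> T h. adm A S \<phi> \<and> fin_sg T \<and> sg_hom S T h
       \<longrightarrow> h (p (S, \<phi>)) = p (T, restrict (h \<circ> \<phi>) A)}"

definition rr :: "'a set \<Rightarrow> (fsg \<times> ('a \<Rightarrow> nat) \<Rightarrow> nat) \<Rightarrow> 'a pw" where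
  "rr A p = (\<lambda>S \<phi>. if adm A S \<phi> then p (S, \<phi>) else 0)"

lemma natC_D:
  "p \<in> natC A \<Longrightarrow> adm A S \<phi> \<Longrightarrow> fin_sg T \<Longrightarrow> sg_hom S T h \<Longrightarrow> h (p (S, \<phi>)) = p (T, restrict (h \<circ> \<phi>) A)"
  unfolding natC_def by blast

lemma natC_top: "p \<in> natC A \<Longrightarrow> p \<in> topspace (PT A)"
  unfolding natC_def by blast

lemma natC_I:
  "p \<in> topspace (PT A) \<Longrightarrow> (\<And>S \<phi> T h. adm A S \<phi> \<Longrightarrow> fin_sg T \<Longrightarrow> sg_hom S T h \<Longrightarrow> h (p (S, \<phi>)) = p (T, restrict (h \<circ> \<phi>) A)) \<Longrightarrow> p \<in> natC A"
  unfolding natC_def by blast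

lemma topspace_PT: "topspace (PT A) = (\<Pi>\<^sub>E i\<in>Idx A. fst (fst i))"
  unfolding PT_def topspace_product_topology by simp

lemma proj_cont:
  assumes "i \<in> Idx A"
  shows "continuous_map (PT A) (discrete_topology (fst (fst i))) (\<lambda>p. p i)"
  unfolding PT_def using continuous_map_product_projection[OF assms, of "\<lambda>i. discrete_topology (fst (fst i))"] by simp

definition Qset :: "'a set \<Rightarrow> (fsg \<times> ('a \<Rightarrow> nat) \<times> fsg \<times> (nat \<Rightarrow> nat)) set" where
  "Qset A = {q. adm A (fst q) (fst (snd q)) \<and> fin_sg (fst (snd (snd q))) \<and> sg_hom (fst q) (fst (snd (snd q))) (snd (snd (snd q)))}"

definition Zq :: "'a set \<Rightarrow> (fsg \<times> ('a \<Rightarrow> nat) \<times> fsg \<times> (nat \<Rightarrow> nat)) \<Rightarrow> (fsg \<times> ('a \<Rightarrow> nat) \<Rightarrow> nat) set" where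
  "Zq A q = {p \<in> topspace (PT A). snd (snd (snd q)) (p (fst q, fst (snd q)))
        = p (fst (snd (snd q)), restrict (snd (snd (snd q)) \<circ> fst (snd q)) A)}"

lemma Zq_closed:
  assumes "q \<in> Qset A" shows "closedin (PT A) (Zq A q)"
proof -
  obtain S \<phi> T h where q: "q = (S, \<phi>, T, h)" by (metis prod.collapse)
  have a: "adm A S \<phi>" "fin_sg T" "sg_hom S T h" using assms unfolding q Qset_def by simp_all
  have i: "(S, \<phi>) \<in> Idx A" using a by (simp add: Idx_def)
  have j: "(T, restrict (h \<circ> \<phi>) A) \<in> Idx A" using adm_restrict_hom[OF a] by (simp add: Idx_def)
  have "h \<in> fst S \<rightarrow> fst T" using a(3) unfolding sg_hom_def by blast
  then have hc: "continuous_map (discrete_topology (fst S)) (discrete_topology (fst T)) h"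
    by simp
  have c1: "continuous_map (PT A) (discrete_topology (fst T)) (h \<circ> (\<lambda>p. p (S, \<phi>)))"
  proof -
    have pc: "continuous_map (PT A) (discrete_topology (fst S)) (\<lambda>p. p (S, \<phi>))" using proj_cont[OF i] by simp
    show ?thesis by (rule continuous_map_compose[OF pc hc])
  qed
  have c2: "continuous_map (PT A) (discrete_topology (fst T)) (\<lambda>p. p (T, restrict (h \<circ> \<phi>) A))"
    using proj_cont[OF j] by simp
  have "closedin (PT A) {p \<in> topspace (PT A). (h \<circ> (\<lambda>p. p (S, \<phi>))) p = p (T, restrict (h \<circ> \<phi>) A)}"
    by (rule closedin_continuous_maps_eq[OF Hausdorff_space_discrete_topology c1 c2])
  then show ?thesis unfolding Zq_def q by simp
qed

lemma natC_eq: "natC A = topspace (PT A) \<inter> \<Inter> (Zq A ` Qset A)"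
proof (rule set_eqI)
  fix p
  show "p \<in> natC A \<longleftrightarrow> p \<in> topspace (PT A) \<inter> \<Inter> (Zq A ` Qset A)"
  proof
    assume p: "p \<in> natC A"
    have "p \<in> Zq A q" if "q \<in> Qset A" for q
    proof -
      obtain S \<phi> T h where q: "q = (S, \<phi>, T, h)" by (metis prod.collapse)
      have a: "adm A S \<phi>" "fin_sg T" "sg_hom S T h" using that unfolding q Qset_def by simp_all
      show ?thesis unfolding Zq_def q using natC_top[OF p] natC_D[OF p a] by simp
    qed
    then show "p \<in> topspace (PT A) \<inter> \<Inter> (Zq A ` Qset A)" using natC_top[OF p] by blast
  next
    assume p: "p \<in> topspace (PT A) \<inter> \<Inter> (Zq A ` Qset A)"
    show "p \<in> natC A"
    proof (rule natC_I)
      show "p \<in> topspace (PT A)" using p by blast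
      fix S \<phi> T h assume a: "adm A S \<phi>" "fin_sg T" "sg_hom S T h"
      then have "(S, \<phi>, T, h) \<in> Qset A" unfolding Qset_def by simp
      then have "p \<in> Zq A (S, \<phi>, T, h)" using p by blast
      then show "h (p (S, \<phi>)) = p (T, restrict (h \<circ> \<phi>) A)" unfolding Zq_def by simp
    qed
  qed
qed

lemma closedin_natC: "closedin (PT A) (natC A)"
proof -
  have "closedin (PT A) (\<Inter> (insert (topspace (PT A)) (Zq A ` Qset A)))"
    by (rule closedin_Inter) (auto intro: Zq_closed)
  moreover have "\<Inter> (insert (topspace (PT A)) (Zq A ` Qset A)) = natC A"
    unfolding natC_eq by simp
  ultimately show ?thesis by simp
qed

lemma rr_Omega: "p \<in> natC A \<Longrightarrow> rr A p \<in> Omega A"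
  unfolding Omega_def
proof (intro CollectI conjI allI impI)
  fix S \<phi> assume p: "p \<in> natC A" and a: "adm A S \<phi>"
  have "p \<in> (\<Pi>\<^sub>E i\<in>Idx A. fst (fst i))" using natC_top[OF p] unfolding topspace_PT by blast
  moreover have "(S, \<phi>) \<in> Idx A" using a by (simp add: Idx_def)
  ultimately have "p (S, \<phi>) \<in> fst (fst (S, \<phi>))" by (rule PiE_mem)
  then show "rr A p S \<phi> \<in> fst S" using a by (simp add: rr_def)
next
  fix S \<phi> assume "\<not> adm A S \<phi>" then show "rr A p S \<phi> = 0" by (simp add: rr_def)
next
  fix S T h \<phi> assume p: "p \<in> natC A" and a: "adm A S \<phi> \<and> fin_sg T \<and> sg_hom S T h"
  have "adm A T (restrict (h \<circ> \<phi>) A)" using adm_restrict_hom a by blast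
  then show "h (rr A p S \<phi>) = rr A p T (restrict (h \<circ> \<phi>) A)"
    using natC_D[OF p] a unfolding rr_def by simp
qed

lemma Omega_sub_rr: "w \<in> Omega A \<Longrightarrow> w \<in> rr A ` natC A"
proof -
  assume w: "w \<in> Omega A"
  define p where "p = restrict (\<lambda>i. w (fst i) (snd i)) (Idx A)"
  have "p \<in> topspace (PT A)" unfolding topspace_PT p_def Idx_def using OmegaD(1)[OF w] by auto
  moreover have "\<forall>S \<phi> T h. adm A S \<phi> \<and> fin_sg T \<and> sg_hom S T h
       \<longrightarrow> h (p (S, \<phi>)) = p (T, restrict (h \<circ> \<phi>) A)"
  proof (intro allI impI)
    fix S \<phi> T h assume a: "adm A S \<phi> \<and> fin_sg T \<and> sg_hom S T h"
    have "adm A T (restrict (h \<circ> \<phi>) A)" using adm_restrict_hom a by blast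
    then show "h (p (S, \<phi>)) = p (T, restrict (h \<circ> \<phi>) A)"
      using a OmegaD(3)[OF w] unfolding p_def Idx_def by auto
  qed
  ultimately have "p \<in> natC A" by (intro natC_I) auto
  moreover have "rr A p = w"
  proof (intro ext)
    fix S \<phi> show "rr A p S \<phi> = w S \<phi>"
      using OmegaD(2)[OF w] unfolding rr_def p_def Idx_def by auto
  qed
  ultimately show ?thesis by blast
qed

lemma rr_cont: "continuous_map (subtopology (PT A) (natC A)) (omega_top A) (rr A)"
proof (rule cont_into)
  have ts: "topspace (subtopology (PT A) (natC A)) = natC A"
    using closedin_subset[OF closedin_natC] by auto
  show "rr A \<in> topspace (subtopology (PT A) (natC A)) \<rightarrow> Omega A" using ts rr_Omega by auto
  fix S \<phi> c assume a: "adm A S \<phi>"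
  have i: "(S, \<phi>) \<in> Idx A" using a by (simp add: Idx_def)
  have "\<forall>U. openin (discrete_topology (fst S)) U \<longrightarrow> openin (PT A) {x \<in> topspace (PT A). x (S, \<phi>) \<in> U}"
    using proj_cont[OF i] unfolding continuous_map_def by simp
  moreover have "openin (discrete_topology (fst S)) ({c} \<inter> fst S)" by simp
  ultimately have "openin (PT A) {p \<in> topspace (PT A). p (S, \<phi>) \<in> {c} \<inter> fst S}"
    by blast
  then have "openin (subtopology (PT A) (natC A)) (natC A \<inter> {p \<in> topspace (PT A). p (S, \<phi>) \<in> {c} \<inter> fst S})"
    by (rule openin_subtopology_Int2)
  moreover have "natC A \<inter> {p \<in> topspace (PT A). p (S, \<phi>) \<in> {c} \<inter> fst S}
      = {x \<in> topspace (subtopology (PT A) (natC A)). rr A x S \<phi> = c}"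
  proof -
    have "p (S, \<phi>) \<in> fst S" if "p \<in> natC A" for p
    proof -
      have "p \<in> (\<Pi>\<^sub>E i\<in>Idx A. fst (fst i))" using natC_top[OF that] unfolding topspace_PT by blast
      then have "p (S, \<phi>) \<in> fst (fst (S, \<phi>))" using i by (rule PiE_mem)
      then show ?thesis by simp
    qed
    then show ?thesis using ts a natC_top unfolding rr_def by auto
  qed
  ultimately show "openin (subtopology (PT A) (natC A)) {x \<in> topspace (subtopology (PT A) (natC A)). rr A x S \<phi> = c}"
    by simp
qed

lemma compact_omega: "compact_space (omega_top A)"
proof -
  have "compact_space (PT A)"
    unfolding PT_def compact_space_product_topology
  proof (intro disjI2 ballI)
    fix i assume "i \<in> Idx A"
    then have "fin_sg (fst i)" unfolding Idx_def using admD(1) by blast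
    then show "compact_space (discrete_topology (fst (fst i)))"
      unfolding compact_space_discrete_topology by (rule fin_sgD(1))
  qed
  then have "compactin (PT A) (natC A)" using closedin_natC closedin_compact_space by blast
  then have "compact_space (subtopology (PT A) (natC A))" by (rule compact_space_subtopology)
  then have "compactin (omega_top A) (rr A ` topspace (subtopology (PT A) (natC A)))"
    using image_compactin rr_cont unfolding compact_space_def by blast
  moreover have "rr A ` topspace (subtopology (PT A) (natC A)) = Omega A"
  proof -
    have ts: "topspace (subtopology (PT A) (natC A)) = natC A"
      using closedin_subset[OF closedin_natC] by auto
    show ?thesis unfolding ts using rr_Omega Omega_sub_rr by blast
  qed
  ultimately show ?thesis unfolding compact_space_def by simp
qed




section \<open>Powers in finite semigroups\<close>

fun spw :: "fsg \<Rightarrow> nat \<Rightarrow> nat \<Rightarrow> nat" where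
  "spw S s 0 = s"
| "spw S s (Suc n) = snd S (spw S s n) s"

lemma spw_in: "fin_sg S \<Longrightarrow> s \<in> fst S \<Longrightarrow> spw S s n \<in> fst S"
  by (induction n) (auto intro: fin_sgD(2))

lemma spw_add:
  assumes "fin_sg S" "s \<in> fst S"
  shows "snd S (spw S s m) (spw S s n) = spw S s (m + n + 1)"
proof (induction n)
  case 0 then show ?case by simp
next
  case (Suc n)
  have "snd S (spw S s m) (spw S s (Suc n)) = snd S (spw S s m) (snd S (spw S s n) s)" by simp
  also have "\<dots> = snd S (snd S (spw S s m) (spw S s n)) s"
    using fin_sgD(3)[OF assms(1) spw_in[OF assms] spw_in[OF assms] assms(2)] by simp
  also have "\<dots> = spw S s (m + Suc n + 1)" using Suc by simp
  finally show ?case .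
qed

lemma spw_mult:
  assumes "fin_sg S" "s \<in> fst S"
  shows "spw S (spw S s m) n = spw S s ((m + 1) * (n + 1) - 1)"
proof (induction n)
  case 0 then show ?case by simp
next
  case (Suc n)
  have "spw S (spw S s m) (Suc n) = snd S (spw S s ((m + 1) * (n + 1) - 1)) (spw S s m)"
    using Suc by simp
  also have "\<dots> = spw S s ((m + 1) * (n + 1) - 1 + m + 1)" by (rule spw_add[OF assms])
  also have "(m + 1) * (n + 1) - 1 + m + 1 = (m + 1) * (Suc n + 1) - 1" by (simp add: algebra_simps)
  finally show ?case .
qed

lemma spw_hom:
  assumes "fin_sg S" "s \<in> fst S" "sg_hom S T h"
  shows "h (spw S s n) = spw T (h s) n"
proof (induction n)
  case 0 then show ?case by simp
next
  case (Suc n)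
  have "h (spw S s (Suc n)) = snd T (h (spw S s n)) (h s)"
    using assms(3) spw_in[OF assms(1,2)] assms(2) unfolding sg_hom_def by simp
  then show ?case using Suc by simp
qed

lemma spw_shift:
  assumes S: "fin_sg S" and st: "s \<in> fst S" "t \<in> fst S"
  shows "snd S (spw S (snd S s t) n) s = snd S s (spw S (snd S t s) n)"
proof (induction n)
  case 0 then show ?case using fin_sgD(3)[OF S st st(1)] by simp
next
  case (Suc n)
  have a: "snd S s t \<in> fst S" "snd S t s \<in> fst S" using fin_sgD(2)[OF S] st by auto
  define P where "P = spw S (snd S s t) n"
  define Q where "Q = spw S (snd S t s) n"
  have P: "P \<in> fst S" unfolding P_def by (rule spw_in[OF S a(1)])
  have Q: "Q \<in> fst S" unfolding Q_def by (rule spw_in[OF S a(2)])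
  note as = fin_sgD(3)[OF S]
  have "snd S (spw S (snd S s t) (Suc n)) s = snd S (snd S P (snd S s t)) s" by (simp add: P_def)
  also have "\<dots> = snd S P (snd S (snd S s t) s)" using as[OF P a(1) st(1)] .
  also have "\<dots> = snd S P (snd S s (snd S t s))" using as[OF st st(1)] by simp
  also have "\<dots> = snd S (snd S P s) (snd S t s)" using as[OF P st(1) a(2)] by simp
  also have "\<dots> = snd S (snd S s Q) (snd S t s)" using Suc by (simp add: P_def Q_def)
  also have "\<dots> = snd S s (snd S Q (snd S t s))" using as[OF st(1) Q a(2)] .
  also have "\<dots> = snd S s (spw S (snd S t s) (Suc n))" by (simp add: Q_def)
  finally show ?case .
qed

definition EE :: "fsg \<Rightarrow> nat" where "EE S = fact (card (fst S))"

lemma EE_pos: "EE S \<ge> 1" unfolding EE_def by (simp add: fact_ge_1)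

lemma periodic:
  assumes S: "fin_sg S" "s \<in> fst S" and m: "m \<ge> 1"
    and idem: "spw S s (2 * m - 1) = spw S s (m - 1)"
    and k: "k \<ge> m - 1"
  shows "spw S s (k + q * m) = spw S s k"
proof -
  have step: "spw S s (k' + m) = spw S s k'" if "k' \<ge> m - 1" for k'
  proof (cases "k' = m - 1")
    case True
    have e: "k' + m = 2 * m - 1" using True m by simp
    show ?thesis unfolding e using idem True by simp
  next
    case False
    then have k': "k' > m - 1" using that by simp
    have e1: "m - 1 + (k' - m) + 1 = k'" using k' m by simp
    have e2: "2 * m - 1 + (k' - m) + 1 = k' + m" using k' m by simp
    have "snd S (spw S s (m - 1)) (spw S s (k' - m)) = spw S s k'"
      using spw_add[OF S, of "m - 1" "k' - m"] unfolding e1 .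
    moreover have "snd S (spw S s (2 * m - 1)) (spw S s (k' - m)) = spw S s (k' + m)"
      using spw_add[OF S, of "2 * m - 1" "k' - m"] unfolding e2 .
    ultimately show ?thesis using idem by simp
  qed
  show ?thesis
  proof (induction q)
    case 0 then show ?case by simp
  next
    case (Suc q)
    have "spw S s (k + Suc q * m) = spw S s ((k + q * m) + m)" by (simp add: algebra_simps)
    also have "\<dots> = spw S s (k + q * m)" using step k by simp
    finally show ?case using Suc by simp
  qed
qed

lemma idem_EE:
  assumes S: "fin_sg S" "s \<in> fst S"
  shows "spw S s (2 * EE S - 1) = spw S s (EE S - 1)"
proof -
  let ?c = "card (fst S)"
  have fin: "finite (fst S)" using fin_sgD(1)[OF S(1)] .
  have c1: "?c \<ge> 1" using S(2) fin by (metis One_nat_def Suc_leI card_gt_0_iff empty_iff)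
  have "\<not> inj_on (spw S s) {0..?c}"
  proof
    assume inj: "inj_on (spw S s) {0..?c}"
    have "spw S s ` {0..?c} \<subseteq> fst S" using spw_in[OF S] by auto
    then have "card (spw S s ` {0..?c}) \<le> ?c" using card_mono[OF fin] by blast
    moreover have "card (spw S s ` {0..?c}) = ?c + 1" using card_image[OF inj] by simp
    ultimately show False by simp
  qed
  then obtain i j where ij: "i \<in> {0..?c}" "j \<in> {0..?c}" "i \<noteq> j" "spw S s i = spw S s j"
    unfolding inj_on_def by blast
  obtain i j where ij: "i < j" "j \<le> ?c" "spw S s i = spw S s j"
  proof (cases "i < j")
    case True then show ?thesis using ij that[of i j] by auto
  next
    case False then show ?thesis using ij that[of j i] by auto
  qed
  define p where "p = j - i"
  have p: "p \<ge> 1" "p \<le> ?c" using ij unfolding p_def by auto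
  have pidem: "spw S s (k + q * p) = spw S s k" if "k \<ge> i" for k q
  proof -
    have step: "spw S s (k' + p) = spw S s k'" if "k' \<ge> i" for k'
    proof (cases "k' = i")
      case True then show ?thesis using ij unfolding p_def by simp
    next
      case False
      then have k': "k' > i" using that by simp
      have e1: "i + (k' - i - 1) + 1 = k'" using k' by simp
      have e2: "j + (k' - i - 1) + 1 = k' + p" using k' ij unfolding p_def by simp
      have "snd S (spw S s i) (spw S s (k' - i - 1)) = spw S s k'"
        using spw_add[OF S, of i "k' - i - 1"] unfolding e1 .
      moreover have "snd S (spw S s j) (spw S s (k' - i - 1)) = spw S s (k' + p)"
        using spw_add[OF S, of j "k' - i - 1"] unfolding e2 .
      ultimately show ?thesis using ij by simp
    qed
    show ?thesis
    proof (induction q)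
      case 0 then show ?case by simp
    next
      case (Suc q)
      have "spw S s (k + Suc q * p) = spw S s ((k + q * p) + p)" by (simp add: algebra_simps)
      also have "\<dots> = spw S s (k + q * p)" using step that by simp
      finally show ?case using Suc by simp
    qed
  qed
  have E: "EE S = fact ?c" by (simp add: EE_def)
  have "i \<le> EE S - 1" using ij fact_ge_self[of ?c] E by linarith
  moreover have "p dvd EE S" unfolding E using p by (simp add: dvd_fact)
  ultimately have "spw S s (EE S - 1 + (EE S div p) * p) = spw S s (EE S - 1)"
    using pidem by blast
  moreover have "EE S - 1 + (EE S div p) * p = 2 * EE S - 1"
    using \<open>p dvd EE S\<close> EE_pos[of S] by simp
  ultimately show ?thesis by simp
qed

lemma indep:
  assumes T: "fin_sg T" "t \<in> fst T" and a: "a \<ge> 1" and idem: "spw T t (2 * a - 1) = spw T t (a - 1)"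
  shows "spw T t (a - 1) = spw T t (EE T - 1)" "spw T t (2 * a - 2) = spw T t (2 * EE T - 2)"
proof -
  let ?b = "EE T"
  have b: "?b \<ge> 1" by (rule EE_pos)
  have ib: "spw T t (2 * ?b - 1) = spw T t (?b - 1)" by (rule idem_EE[OF T])
  have "spw T t (a - 1 + (?b - 1) * a) = spw T t (a - 1)" by (rule periodic[OF T a idem]) simp
  moreover have "spw T t (?b - 1 + (a - 1) * ?b) = spw T t (?b - 1)" by (rule periodic[OF T b ib]) simp
  moreover have "a - 1 + (?b - 1) * a = ?b - 1 + (a - 1) * ?b"
    using a b by (simp add: algebra_simps)
  ultimately show "spw T t (a - 1) = spw T t (EE T - 1)" by simp
  have "spw T t (2 * a - 2 + (2 * ?b - 2) * a) = spw T t (2 * a - 2)" by (rule periodic[OF T a idem]) (use a in simp)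
  moreover have "spw T t (2 * ?b - 2 + (2 * a - 2) * ?b) = spw T t (2 * ?b - 2)" by (rule periodic[OF T b ib]) (use b in simp)
  moreover have "2 * a - 2 + (2 * ?b - 2) * a = 2 * ?b - 2 + (2 * a - 2) * ?b"
    using a b by (simp add: algebra_simps)
  ultimately show "spw T t (2 * a - 2) = spw T t (2 * EE T - 2)" by simp
qed


definition pom :: "'a set \<Rightarrow> 'a pw \<Rightarrow> 'a pw" where
  "pom A u = (\<lambda>S \<phi>. if adm A S \<phi> then spw S (u S \<phi>) (EE S - 1) else 0)"

definition pom1 :: "'a set \<Rightarrow> 'a pw \<Rightarrow> 'a pw" where
  "pom1 A u = (\<lambda>S \<phi>. if adm A S \<phi> then spw S (u S \<phi>) (2 * EE S - 2) else 0)"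

lemma pom_adm: "adm A S \<phi> \<Longrightarrow> pom A u S \<phi> = spw S (u S \<phi>) (EE S - 1)"
  by (simp add: pom_def)

lemma pom1_adm: "adm A S \<phi> \<Longrightarrow> pom1 A u S \<phi> = spw S (u S \<phi>) (2 * EE S - 2)"
  by (simp add: pom1_def)

lemma pw_Omega_gen:
  assumes u: "u \<in> Omega A"
    and k: "\<And>S. k S \<ge> EE S - 1"
    and per: "\<And>S T t. fin_sg S \<Longrightarrow> fin_sg T \<Longrightarrow> t \<in> fst T \<Longrightarrow> spw T t (2 * EE S - 1) = spw T t (EE S - 1)
               \<Longrightarrow> spw T t (k S) = spw T t (k T)"
  shows "(\<lambda>S \<phi>. if adm A S \<phi> then spw S (u S \<phi>) (k S) else 0) \<in> Omega A"
  unfolding Omega_def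
proof (intro CollectI conjI allI impI)
  fix S \<phi> assume a: "adm A S \<phi>"
  show "(if adm A S \<phi> then spw S (u S \<phi>) (k S) else 0) \<in> fst S"
    using a spw_in[OF admD(1)[OF a] OmegaD(1)[OF u a]] by simp
next
  fix S \<phi> assume "\<not> adm A S \<phi>"
  then show "(if adm A S \<phi> then spw S (u S \<phi>) (k S) else 0) = 0" by simp
next
  fix S T h \<phi> assume a: "adm A S \<phi> \<and> fin_sg T \<and> sg_hom S T h"
  then have a1: "adm A S \<phi>" and T: "fin_sg T" and h: "sg_hom S T h" by auto
  have a2: "adm A T (restrict (h \<circ> \<phi>) A)" using adm_restrict_hom a by blast
  have S: "fin_sg S" using admD(1)[OF a1] .
  have s: "u S \<phi> \<in> fst S" using OmegaD(1)[OF u a1] .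
  have ht: "h (u S \<phi>) = u T (restrict (h \<circ> \<phi>) A)" using OmegaD(3)[OF u a1 T h] .
  have t: "u T (restrict (h \<circ> \<phi>) A) \<in> fst T" using OmegaD(1)[OF u a2] .
  have "spw T (h (u S \<phi>)) (2 * EE S - 1) = h (spw S (u S \<phi>) (2 * EE S - 1))"
    using spw_hom[OF S s h] by simp
  also have "\<dots> = h (spw S (u S \<phi>) (EE S - 1))" using idem_EE[OF S s] by simp
  also have "\<dots> = spw T (h (u S \<phi>)) (EE S - 1)" using spw_hom[OF S s h] by simp
  finally have id: "spw T (h (u S \<phi>)) (2 * EE S - 1) = spw T (h (u S \<phi>)) (EE S - 1)" .
  have "h (spw S (u S \<phi>) (k S)) = spw T (h (u S \<phi>)) (k S)" using spw_hom[OF S s h] .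
  also have "\<dots> = spw T (h (u S \<phi>)) (k T)" using per[OF S T _ id] t ht by simp
  finally show "h (if adm A S \<phi> then spw S (u S \<phi>) (k S) else 0)
      = (if adm A T (restrict (h \<circ> \<phi>) A) then spw T (u T (restrict (h \<circ> \<phi>) A)) (k T) else 0)"
    using a1 a2 ht by simp
qed

lemma pom_Omega: assumes "u \<in> Omega A" shows "pom A u \<in> Omega A"
  unfolding pom_def
  by (rule pw_Omega_gen[OF assms]) (use indep(1) EE_pos in auto)

lemma pom1_Omega: assumes "u \<in> Omega A" shows "pom1 A u \<in> Omega A"
  unfolding pom1_def
  by (rule pw_Omega_gen[OF assms]) (use indep(2) EE_pos in auto)

lemma I1: assumes "u \<in> Omega A" shows "pmul A (pom A u) u = pmul A u (pom A u)"
proof (rule Omega_eqI[where A=A])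
  show "pmul A (pom A u) u \<in> Omega A" "pmul A u (pom A u) \<in> Omega A"
    using assms by (intro pmul_Omega pom_Omega pom1_Omega assms)+
  fix S \<phi> assume a: "adm A S \<phi>"
  have S: "fin_sg S" "u S \<phi> \<in> fst S" using admD(1)[OF a] OmegaD(1)[OF assms a] by auto
  show "pmul A (pom A u) u S \<phi> = pmul A u (pom A u) S \<phi>"
    using spw_add[OF S, of "EE S - 1" 0] spw_add[OF S, of 0 "EE S - 1"]
    by (simp add: pmul_adm a pom_adm)
qed

lemma I2: assumes "u \<in> Omega A" shows "pmul A u (pom1 A u) = pom A u"
proof (rule Omega_eqI[where A=A])
  show "pmul A u (pom1 A u) \<in> Omega A" "pom A u \<in> Omega A"
    using assms by (intro pmul_Omega pom_Omega pom1_Omega assms)+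
  fix S \<phi> assume a: "adm A S \<phi>"
  have S: "fin_sg S" "u S \<phi> \<in> fst S" using admD(1)[OF a] OmegaD(1)[OF assms a] by auto
  have e: "0 + (2 * EE S - 2) + 1 = 2 * EE S - 1" using EE_pos[of S] by simp
  show "pmul A u (pom1 A u) S \<phi> = pom A u S \<phi>"
    using spw_add[OF S, of 0 "2 * EE S - 2"] idem_EE[OF S] unfolding e
    by (simp add: pmul_adm a pom_adm pom1_adm)
qed

lemma I3: assumes "u \<in> Omega A" shows "pmul A (pom1 A u) u = pom A u"
proof (rule Omega_eqI[where A=A])
  show "pmul A (pom1 A u) u \<in> Omega A" "pom A u \<in> Omega A"
    using assms by (intro pmul_Omega pom_Omega pom1_Omega assms)+
  fix S \<phi> assume a: "adm A S \<phi>"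
  have S: "fin_sg S" "u S \<phi> \<in> fst S" using admD(1)[OF a] OmegaD(1)[OF assms a] by auto
  have e: "(2 * EE S - 2) + 0 + 1 = 2 * EE S - 1" using EE_pos[of S] by simp
  show "pmul A (pom1 A u) u S \<phi> = pom A u S \<phi>"
    using spw_add[OF S, of "2 * EE S - 2" 0] idem_EE[OF S] unfolding e
    by (simp add: pmul_adm a pom_adm pom1_adm)
qed

lemma I4: assumes "u \<in> Omega A" shows "pom A (pmul A u u) = pom A u"
proof (rule Omega_eqI[where A=A])
  show "pom A (pmul A u u) \<in> Omega A" "pom A u \<in> Omega A"
    using assms by (intro pmul_Omega pom_Omega pom1_Omega assms)+
  fix S \<phi> assume a: "adm A S \<phi>"
  have S: "fin_sg S" "u S \<phi> \<in> fst S" using admD(1)[OF a] OmegaD(1)[OF assms a] by auto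
  have e: "(1 + 1) * (EE S - 1 + 1) - 1 = 2 * EE S - 1" using EE_pos[of S] by simp
  have "snd S (u S \<phi>) (u S \<phi>) = spw S (u S \<phi>) 1" by simp
  then show "pom A (pmul A u u) S \<phi> = pom A u S \<phi>"
    using spw_mult[OF S, of 1 "EE S - 1"] idem_EE[OF S] unfolding e
    by (simp add: pmul_adm a pom_adm)
qed

lemma I5:
  assumes "x \<in> Omega A" "y \<in> Omega A"
  shows "pmul A (pom A (pmul A x y)) x = pmul A x (pom A (pmul A y x))"
proof (rule Omega_eqI[where A=A])
  show "pmul A (pom A (pmul A x y)) x \<in> Omega A" "pmul A x (pom A (pmul A y x)) \<in> Omega A"
    using assms by (intro pmul_Omega pom_Omega pom1_Omega assms)+
  fix S \<phi> assume a: "adm A S \<phi>"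
  show "pmul A (pom A (pmul A x y)) x S \<phi> = pmul A x (pom A (pmul A y x)) S \<phi>"
    using spw_shift[OF admD(1)[OF a] OmegaD(1)[OF assms(1) a] OmegaD(1)[OF assms(2) a]]
    by (simp add: pmul_adm a pom_adm)
qed

definition substf :: "'a set \<Rightarrow> 'b set \<Rightarrow> ('b \<Rightarrow> 'a pw) \<Rightarrow> 'b pw \<Rightarrow> 'a pw" where
  "substf A B g w = (\<lambda>S \<phi>. if adm A S \<phi> then w S (restrict (\<lambda>b. g b S \<phi>) B) else 0)"

lemma subst_adm:
  assumes g: "\<forall>b\<in>B. g b \<in> Omega A" and a: "adm A S \<phi>"
  shows "adm B S (restrict (\<lambda>b. g b S \<phi>) B)"
  using admD[OF a] OmegaD(1)[OF _ a] g unfolding adm_def by auto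

lemma substf_adm: "adm A S \<phi> \<Longrightarrow> substf A B g w S \<phi> = w S (restrict (\<lambda>b. g b S \<phi>) B)"
  by (simp add: substf_def)

lemma substf_Omega:
  assumes g: "\<forall>b\<in>B. g b \<in> Omega A" and w: "w \<in> Omega B"
  shows "substf A B g w \<in> Omega A"
  unfolding Omega_def
proof (intro CollectI conjI allI impI)
  fix S \<phi> assume a: "adm A S \<phi>"
  show "substf A B g w S \<phi> \<in> fst S" using OmegaD(1)[OF w subst_adm[OF g a]] a by (simp add: substf_adm)
next
  fix S \<phi> assume "\<not> adm A S \<phi>" then show "substf A B g w S \<phi> = 0" by (simp add: substf_def)
next
  fix S T h \<phi> assume a: "adm A S \<phi> \<and> fin_sg T \<and> sg_hom S T h"
  then have a1: "adm A S \<phi>" and T: "fin_sg T" and h: "sg_hom S T h" by auto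
  have a2: "adm A T (restrict (h \<circ> \<phi>) A)" using adm_restrict_hom a by blast
  have "h (w S (restrict (\<lambda>b. g b S \<phi>) B)) = w T (restrict (h \<circ> restrict (\<lambda>b. g b S \<phi>) B) B)"
    using OmegaD(3)[OF w subst_adm[OF g a1] T h] .
  also have "restrict (h \<circ> restrict (\<lambda>b. g b S \<phi>) B) B = restrict (\<lambda>b. g b T (restrict (h \<circ> \<phi>) A)) B"
  proof (rule restrict_ext)
    fix b assume "b \<in> B"
    then show "(h \<circ> restrict (\<lambda>b. g b S \<phi>) B) b = g b T (restrict (h \<circ> \<phi>) A)"
      using OmegaD(3)[OF _ a1 T h] g by simp
  qed
  finally have X: "h (w S (restrict (\<lambda>b. g b S \<phi>) B)) = w T (restrict (\<lambda>b. g b T (restrict (h \<circ> \<phi>) A)) B)" .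
  show "h (substf A B g w S \<phi>) = substf A B g w T (restrict (h \<circ> \<phi>) A)"
    unfolding substf_adm[OF a1] substf_adm[OF a2] by (rule X)
qed

lemma substf_pmul:
  assumes g: "\<forall>b\<in>B. g b \<in> Omega A" and u: "u \<in> Omega B" and v: "v \<in> Omega B"
  shows "substf A B g (pmul B u v) = pmul A (substf A B g u) (substf A B g v)"
proof (rule Omega_eqI[where A=A])
  show "substf A B g (pmul B u v) \<in> Omega A" "pmul A (substf A B g u) (substf A B g v) \<in> Omega A"
    by (intro pmul_Omega substf_Omega[OF g] u v)+
  fix S \<phi> assume a: "adm A S \<phi>"
  show "substf A B g (pmul B u v) S \<phi> = pmul A (substf A B g u) (substf A B g v) S \<phi>"
    using subst_adm[OF g a] a by (simp add: substf_adm pmul_adm)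
qed

lemma substf_gen:
  assumes g: "\<forall>b\<in>B. g b \<in> Omega A" and b: "b \<in> B"
  shows "substf A B g (gen B b) = g b"
proof (rule Omega_eqI[where A=A])
  show "substf A B g (gen B b) \<in> Omega A" "g b \<in> Omega A"
    using substf_Omega[OF g] gen_Omega[OF b] g b by auto
  fix S \<phi> assume a: "adm A S \<phi>"
  show "substf A B g (gen B b) S \<phi> = g b S \<phi>"
    using subst_adm[OF g a] a b by (simp add: substf_adm gen_adm)
qed

lemma substf_pom:
  assumes g: "\<forall>b\<in>B. g b \<in> Omega A" and w: "w \<in> Omega B"
  shows "substf A B g (pom B w) = pom A (substf A B g w)"
proof (rule Omega_eqI[where A=A])
  show "substf A B g (pom B w) \<in> Omega A" "pom A (substf A B g w) \<in> Omega A"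
    using substf_Omega[OF g] pom_Omega w by auto
  fix S \<phi> assume a: "adm A S \<phi>"
  show "substf A B g (pom B w) S \<phi> = pom A (substf A B g w) S \<phi>"
    using subst_adm[OF g a] a by (simp add: substf_adm pom_adm)
qed

lemma substf_cont:
  assumes g: "\<forall>b\<in>B. g b \<in> Omega A"
  shows "continuous_map (omega_top B) (omega_top A) (substf A B g)"
proof (rule cont_into)
  show "substf A B g \<in> topspace (omega_top B) \<rightarrow> Omega A" using substf_Omega[OF g] by auto
  fix S \<phi> c assume a: "adm A S \<phi>"
  have "{x \<in> topspace (omega_top B). substf A B g x S \<phi> = c} = {x \<in> Omega B. x S (restrict (\<lambda>b. g b S \<phi>) B) = c}"
    using a by (simp add: substf_adm)
  then show "openin (omega_top B) {x \<in> topspace (omega_top B). substf A B g x S \<phi> = c}"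
    using openin_basic[OF subst_adm[OF g a]] by simp
qed

lemma substf_cont_hom:
  assumes g: "\<forall>b\<in>B. g b \<in> Omega A"
  shows "cont_hom B A (substf A B g)"
  unfolding cont_hom_def using substf_Omega[OF g] substf_cont[OF g] substf_pmul[OF g] by auto

section \<open>omega equals the pointwise power\<close>

lemma ppow_adm: "adm A S \<phi> \<Longrightarrow> ppow A u k S \<phi> = spw S (u S \<phi>) k"
  by (induction k) (simp_all add: pmul_adm)

lemma ppow_Omega: "u \<in> Omega A \<Longrightarrow> ppow A u k \<in> Omega A"
  by (induction k) (simp_all add: pmul_Omega)

lemma omega_lim:
  assumes u: "u \<in> Omega A"
  shows "limitin (omega_top A) (\<lambda>n. ppow A u (fact n - 1)) (pom A u) sequentially"
  unfolding limitin_def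
proof (intro conjI allI impI)
  show "pom A u \<in> topspace (omega_top A)" using pom_Omega[OF u] by simp
  fix U assume U: "openin (omega_top A) U \<and> pom A u \<in> U"
  then obtain S \<phi> where S: "adm A S \<phi>" "{x \<in> Omega A. x S \<phi> = pom A u S \<phi>} \<subseteq> U"
    using base by blast
  have fS: "fin_sg S" and s: "u S \<phi> \<in> fst S" using admD(1)[OF S(1)] OmegaD(1)[OF u S(1)] by auto
  show "\<forall>\<^sub>F n in sequentially. ppow A u (fact n - 1) \<in> U"
  proof (rule eventually_sequentiallyI[of "card (fst S)"])
    fix n assume n: "card (fst S) \<le> n"
    have d: "EE S dvd fact n" unfolding EE_def using n by (rule fact_dvd)
    then obtain q where q: "fact n = EE S * q" by blast
    have q1: "q \<ge> 1" using q fact_ge_1[of n] by (cases q) auto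
    have e: "fact n - 1 = EE S - 1 + (q - 1) * EE S" using q q1 EE_pos[of S]
      by (cases q) (auto simp: algebra_simps)
    have "spw S (u S \<phi>) (fact n - 1) = spw S (u S \<phi>) (EE S - 1)"
      unfolding e by (rule periodic[OF fS s EE_pos idem_EE[OF fS s]]) simp
    then have "ppow A u (fact n - 1) S \<phi> = pom A u S \<phi>" using S(1) by (simp add: ppow_adm pom_adm)
    then show "ppow A u (fact n - 1) \<in> U" using S(2) ppow_Omega[OF u] by blast
  qed
qed

lemma omega_eq: assumes u: "u \<in> Omega A" shows "omega A u = pom A u"
  unfolding omega_def
proof (rule the_equality)
  show "limitin (omega_top A) (\<lambda>n. ppow A u (fact n - 1)) (pom A u) sequentially" by (rule omega_lim[OF u])
  fix w assume "limitin (omega_top A) (\<lambda>n. ppow A u (fact n - 1)) w sequentially"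
  then show "w = pom A u"
    using limitin_Hausdorff_unique[OF _ omega_lim[OF u] trivial_limit_sequentially Hausdorff_omega] by blast
qed




abbreviation PTT :: "'a set \<Rightarrow> ('a pw \<times> 'a pw) topology" where
  "PTT A \<equiv> prod_topology (omega_top A) (omega_top A)"

definition closedR :: "'a set \<Rightarrow> ('a pw \<times> 'a pw) set \<Rightarrow> bool" where
  "closedR A R \<longleftrightarrow> PTT A closure_of R \<subseteq> R"

lemma PR_least:
  "Sigma0 \<Sigma> A \<subseteq> R \<Longrightarrow> trans R \<Longrightarrow> closedR A R \<Longrightarrow> provable_rel \<Sigma> A \<subseteq> R"
  unfolding provable_rel_def closedR_def by blast

lemma PR_sigma0: "Sigma0 \<Sigma> A \<subseteq> provable_rel \<Sigma> A"
  unfolding provable_rel_def by blast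

lemma PR_trans: "trans (provable_rel \<Sigma> A)"
  unfolding provable_rel_def trans_def by blast

lemma PR_closed: "closedR A (provable_rel \<Sigma> A)"
  unfolding closedR_def provable_rel_def
proof
  fix z assume z: "z \<in> PTT A closure_of \<Inter> {R. Sigma0 \<Sigma> A \<subseteq> R \<and> trans R \<and> PTT A closure_of R \<subseteq> R}"
  show "z \<in> \<Inter> {R. Sigma0 \<Sigma> A \<subseteq> R \<and> trans R \<and> PTT A closure_of R \<subseteq> R}"
  proof
    fix R assume R: "R \<in> {R. Sigma0 \<Sigma> A \<subseteq> R \<and> trans R \<and> PTT A closure_of R \<subseteq> R}"
    then have "\<Inter> {R. Sigma0 \<Sigma> A \<subseteq> R \<and> trans R \<and> PTT A closure_of R \<subseteq> R} \<subseteq> R" by blast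
    then have "PTT A closure_of \<Inter> {R. Sigma0 \<Sigma> A \<subseteq> R \<and> trans R \<and> PTT A closure_of R \<subseteq> R} \<subseteq> PTT A closure_of R"
      by (rule closure_of_mono)
    then show "z \<in> R" using z R by blast
  qed
qed

lemma PR_transD: "(x, y) \<in> provable_rel \<Sigma> A \<Longrightarrow> (y, z) \<in> provable_rel \<Sigma> A \<Longrightarrow> (x, z) \<in> provable_rel \<Sigma> A"
  using PR_trans unfolding trans_def by blast

lemma teval_Omega: "(\<forall>i. \<rho> i \<in> Omega A) \<Longrightarrow> teval A \<rho> t \<in> Omega A"
  by (induction t) (auto intro: pmul_Omega)

definition SigOm :: "('b set \<times> 'b pw \<times> 'b pw) set \<Rightarrow> bool" where
  "SigOm \<Sigma> \<longleftrightarrow> (\<forall>B l r. (B, l, r) \<in> \<Sigma> \<longrightarrow> l \<in> Omega B \<and> r \<in> Omega B)"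

lemma Sigma0E:
  assumes "z \<in> Sigma0 \<Sigma> A"
  obtains B u v f \<rho> t where "z = (teval A (\<rho>(0 := f u)) t, teval A (\<rho>(0 := f v)) t)"
    "(B, u, v) \<in> \<Sigma> \<or> (B, v, u) \<in> \<Sigma>" "cont_hom B A f" "\<forall>i. \<rho> i \<in> Omega A"
proof -
  from assms have "\<exists>B u v f \<rho> t. z = (teval A (\<rho>(0 := f u)) t, teval A (\<rho>(0 := f v)) t) \<and>
      ((B, u, v) \<in> \<Sigma> \<or> (B, v, u) \<in> \<Sigma>) \<and> cont_hom B A f \<and> (\<forall>i. \<rho> i \<in> Omega A)"
    unfolding Sigma0_def by (simp only: mem_Collect_eq)
  then show ?thesis using that by (elim exE conjE) (rule that; assumption)
qed

lemma Sigma0I: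
  assumes "(B, u, v) \<in> \<Sigma> \<or> (B, v, u) \<in> \<Sigma>" "cont_hom B A f" "\<forall>i. \<rho> i \<in> Omega A"
  shows "(teval A (\<rho>(0 := f u)) t, teval A (\<rho>(0 := f v)) t) \<in> Sigma0 \<Sigma> A"
  unfolding Sigma0_def mem_Collect_eq
  by (rule exI[of _ B], rule exI[of _ u], rule exI[of _ v], rule exI[of _ f], rule exI[of _ \<rho>], rule exI[of _ t])
     (use assms in simp)

lemma Sigma0_sub:
  assumes "SigOm \<Sigma>" "z \<in> Sigma0 \<Sigma> A" shows "z \<in> Omega A \<times> Omega A"
proof -
  obtain B u v f \<rho> t where z: "z = (teval A (\<rho>(0 := f u)) t, teval A (\<rho>(0 := f v)) t)"
    "(B, u, v) \<in> \<Sigma> \<or> (B, v, u) \<in> \<Sigma>" "cont_hom B A f" "\<forall>i. \<rho> i \<in> Omega A"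
    by (rule Sigma0E[OF assms(2)])
  have uv: "u \<in> Omega B" "v \<in> Omega B" using z(2) assms(1) unfolding SigOm_def by blast+
  have fP: "f \<in> Omega B \<rightarrow> Omega A" using z(3) unfolding cont_hom_def by (rule conjunct1)
  have "f u \<in> Omega A" "f v \<in> Omega A" using funcset_mem[OF fP uv(1)] funcset_mem[OF fP uv(2)] by simp_all
  then have r: "\<forall>i. (\<rho>(0 := f u)) i \<in> Omega A" "\<forall>i. (\<rho>(0 := f v)) i \<in> Omega A" using z(4) by simp_all
  have "teval A (\<rho>(0 := f u)) t \<in> Omega A" "teval A (\<rho>(0 := f v)) t \<in> Omega A"
    by (rule teval_Omega[OF r(1)], rule teval_Omega[OF r(2)])
  then show ?thesis unfolding z(1) by simp
qed

lemma PR_sub: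
  assumes "SigOm \<Sigma>" shows "provable_rel \<Sigma> A \<subseteq> Omega A \<times> Omega A"
proof (rule PR_least)
  show "Sigma0 \<Sigma> A \<subseteq> Omega A \<times> Omega A" using Sigma0_sub[OF assms] by (rule subsetI)
  show "trans (Omega A \<times> Omega A)" unfolding trans_def by simp
  show "closedR A (Omega A \<times> Omega A)" unfolding closedR_def
    using closure_of_subset_topspace[of "PTT A"] by simp
qed

lemma Sigma0_swap: "(a, b) \<in> Sigma0 \<Sigma> A \<Longrightarrow> (b, a) \<in> Sigma0 \<Sigma> A"
proof -
  assume "(a, b) \<in> Sigma0 \<Sigma> A"
  then obtain B u v f \<rho> t where z: "(a, b) = (teval A (\<rho>(0 := f u)) t, teval A (\<rho>(0 := f v)) t)"
    "(B, u, v) \<in> \<Sigma> \<or> (B, v, u) \<in> \<Sigma>" "cont_hom B A f" "\<forall>i. \<rho> i \<in> Omega A"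
    by (rule Sigma0E)
  have "(B, v, u) \<in> \<Sigma> \<or> (B, u, v) \<in> \<Sigma>" using z(2) by blast
  from Sigma0I[OF this z(3) z(4), of t] show ?thesis using z(1) by simp
qed

lemma PR_map:
  assumes sig: "SigOm \<Sigma>"
    and mc: "continuous_map (omega_top A) (omega_top A) \<mu>"
    and ms: "\<And>a b. (a, b) \<in> Sigma0 \<Sigma> A \<Longrightarrow> (\<mu> a, \<mu> b) \<in> provable_rel \<Sigma> A"
    and xy: "(x, y) \<in> provable_rel \<Sigma> A"
  shows "(\<mu> x, \<mu> y) \<in> provable_rel \<Sigma> A"
proof -
  let ?P = "provable_rel \<Sigma> A"
  let ?m = "\<lambda>z. (\<mu> (fst z), \<mu> (snd z))"
  let ?R = "{z \<in> ?P. ?m z \<in> ?P}"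
  have Psub: "?P \<subseteq> topspace (PTT A)" using PR_sub[OF sig] by simp
  have "?P \<subseteq> ?R"
  proof (rule PR_least)
    show "Sigma0 \<Sigma> A \<subseteq> ?R"
    proof (rule subsetI)
      fix z assume z: "z \<in> Sigma0 \<Sigma> A"
      obtain a b where ab: "z = (a, b)" by (cases z)
      have "(a, b) \<in> ?P" using PR_sigma0 z ab by blast
      moreover have "(\<mu> a, \<mu> b) \<in> ?P" using ms z ab by blast
      ultimately show "z \<in> ?R" using ab by simp
    qed
    show "trans ?R"
    proof (rule transI)
      fix x y z assume xy: "(x, y) \<in> ?R" and yz: "(y, z) \<in> ?R"
      have 1: "(x, y) \<in> ?P" "(\<mu> x, \<mu> y) \<in> ?P" using xy by simp_all
      have 2: "(y, z) \<in> ?P" "(\<mu> y, \<mu> z) \<in> ?P" using yz by simp_all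
      have "(x, z) \<in> ?P" by (rule PR_transD[OF 1(1) 2(1)])
      moreover have "(\<mu> x, \<mu> z) \<in> ?P" by (rule PR_transD[OF 1(2) 2(2)])
      ultimately show "(x, z) \<in> ?R" by simp
    qed
    have m1: "continuous_map (PTT A) (omega_top A) (\<lambda>z. \<mu> (fst z))"
      using continuous_map_compose[OF continuous_map_fst mc] unfolding o_def .
    have m2: "continuous_map (PTT A) (omega_top A) (\<lambda>z. \<mu> (snd z))"
      using continuous_map_compose[OF continuous_map_snd mc] unfolding o_def .
    have mcont: "continuous_map (PTT A) (PTT A) ?m"
      by (rule continuous_map_pairedI[OF m1 m2])
    have c1: "PTT A closure_of ?P \<subseteq> ?P" using PR_closed[of A \<Sigma>] unfolding closedR_def .
    have c2: "PTT A closure_of {z \<in> topspace (PTT A). ?m z \<in> ?P} \<subseteq> {z \<in> topspace (PTT A). ?m z \<in> PTT A closure_of ?P}"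
      by (rule continuous_map_closure_preimage_subset[OF mcont])
    have s1: "?R \<subseteq> ?P" by (rule subsetI) simp
    have s2: "?R \<subseteq> {z \<in> topspace (PTT A). ?m z \<in> ?P}"
    proof (rule subsetI)
      fix z assume "z \<in> ?R"
      then have "z \<in> ?P" "?m z \<in> ?P" by simp_all
      then show "z \<in> {z \<in> topspace (PTT A). ?m z \<in> ?P}" using Psub by blast
    qed
    show "closedR A ?R" unfolding closedR_def
    proof (rule subsetI)
      fix z assume z: "z \<in> PTT A closure_of ?R"
      have "z \<in> PTT A closure_of ?P" by (rule subsetD[OF closure_of_mono[OF s1] z])
      then have zP: "z \<in> ?P" by (rule subsetD[OF c1])
      have "z \<in> PTT A closure_of {z \<in> topspace (PTT A). ?m z \<in> ?P}" by (rule subsetD[OF closure_of_mono[OF s2] z])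
      then have "z \<in> {z \<in> topspace (PTT A). ?m z \<in> PTT A closure_of ?P}" by (rule subsetD[OF c2])
      then have "?m z \<in> PTT A closure_of ?P" by simp
      then have "?m z \<in> ?P" by (rule subsetD[OF c1])
      then show "z \<in> ?R" using zP by simp
    qed
  qed
  from subsetD[OF this xy] show ?thesis by simp
qed

lemma PR_sym:
  assumes sig: "SigOm \<Sigma>" and xy: "(x, y) \<in> provable_rel \<Sigma> A"
  shows "(y, x) \<in> provable_rel \<Sigma> A"
proof -
  let ?P = "provable_rel \<Sigma> A"
  have Psub: "?P \<subseteq> topspace (PTT A)" using PR_sub[OF sig] by simp
  have "?P \<subseteq> converse ?P"
  proof (rule PR_least)
    show "Sigma0 \<Sigma> A \<subseteq> converse ?P" using Sigma0_swap PR_sigma0 by fastforce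
    show "trans (converse ?P)"
    proof (rule transI)
      fix x y z assume "(x, y) \<in> converse ?P" "(y, z) \<in> converse ?P"
      then show "(x, z) \<in> converse ?P" using PR_transD[of z y \<Sigma> A x] by auto
    qed
    let ?sw = "\<lambda>z. (snd z, fst z)"
    have sc: "continuous_map (PTT A) (PTT A) ?sw"
      by (rule continuous_map_pairedI[OF continuous_map_snd continuous_map_fst])
    have eq: "converse ?P = {z \<in> topspace (PTT A). ?sw z \<in> ?P}" using Psub by auto
    have "PTT A closure_of converse ?P \<subseteq> {z \<in> topspace (PTT A). ?sw z \<in> PTT A closure_of ?P}"
      unfolding eq by (rule continuous_map_closure_preimage_subset[OF sc])
    also have "\<dots> \<subseteq> converse ?P" using PR_closed[of A \<Sigma>] unfolding closedR_def by auto
    finally show "closedR A (converse ?P)" unfolding closedR_def .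
  qed
  then show ?thesis using xy by blast
qed

lemma PR_refl:
  assumes ne: "(B, l, r) \<in> \<Sigma>" and w: "w \<in> Omega A"
  shows "(w, w) \<in> provable_rel \<Sigma> A"
proof -
  let ?f = "substf A B (\<lambda>_. w)"
  have g: "\<forall>b\<in>B. (\<lambda>_. w) b \<in> Omega A" using w by simp
  have ch: "cont_hom B A ?f" by (rule substf_cont_hom[OF g])
  have d: "(B, l, r) \<in> \<Sigma> \<or> (B, r, l) \<in> \<Sigma>" using ne by (rule disjI1)
  have r: "\<forall>i. (\<lambda>_. w) i \<in> Omega A" using w by simp
  have "(teval A ((\<lambda>_. w)(0 := ?f l)) (TVar 1), teval A ((\<lambda>_. w)(0 := ?f r)) (TVar 1)) \<in> Sigma0 \<Sigma> A"
    by (rule Sigma0I[OF d ch r])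
  moreover have "teval A ((\<lambda>_. w)(0 := ?f l)) (TVar 1) = w" "teval A ((\<lambda>_. w)(0 := ?f r)) (TVar 1) = w"
    by simp_all
  ultimately have "(w, w) \<in> Sigma0 \<Sigma> A" by simp
  then show ?thesis using PR_sigma0 by (rule subsetD[rotated])
qed

fun shiftt :: "sg_term \<Rightarrow> sg_term" where
  "shiftt (TVar 0) = TVar 0"
| "shiftt (TVar (Suc i)) = TVar (Suc (Suc i))"
| "shiftt (TMul a b) = TMul (shiftt a) (shiftt b)"

lemma teval_shift:
  "teval A ((\<lambda>i. if i = 1 then c else if i = 0 then \<rho> 0 else \<rho> (i - 1))(0 := z)) (shiftt t)
   = teval A (\<rho>(0 := z)) t"
proof (induction t)
  case (TVar i) then show ?case by (cases i) auto
next
  case (TMul a b) then show ?case by simp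
qed

lemma Sigma0_lmul:
  assumes "(a, b) \<in> Sigma0 \<Sigma> A" "c \<in> Omega A"
  shows "(pmul A c a, pmul A c b) \<in> Sigma0 \<Sigma> A"
proof -
  obtain B u v f \<rho> t where z: "(a, b) = (teval A (\<rho>(0 := f u)) t, teval A (\<rho>(0 := f v)) t)"
    "(B, u, v) \<in> \<Sigma> \<or> (B, v, u) \<in> \<Sigma>" "cont_hom B A f" "\<forall>i. \<rho> i \<in> Omega A"
    by (rule Sigma0E[OF assms(1)])
  define \<rho>' where "\<rho>' = (\<lambda>i. if i = 1 then c else if i = 0 then \<rho> 0 else \<rho> (i - 1))"
  have r': "\<forall>i. \<rho>' i \<in> Omega A" using z(4) assms(2) unfolding \<rho>'_def by auto
  have "(teval A (\<rho>'(0 := f u)) (TMul (TVar 1) (shiftt t)), teval A (\<rho>'(0 := f v)) (TMul (TVar 1) (shiftt t))) \<in> Sigma0 \<Sigma> A"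
    by (rule Sigma0I[OF z(2) z(3) r'])
  moreover have "\<rho>' 1 = c" unfolding \<rho>'_def by simp
  moreover have "teval A (\<rho>'(0 := f u)) (shiftt t) = teval A (\<rho>(0 := f u)) t"
    "teval A (\<rho>'(0 := f v)) (shiftt t) = teval A (\<rho>(0 := f v)) t"
    unfolding \<rho>'_def by (rule teval_shift)+
  ultimately show ?thesis using z(1) by simp
qed

lemma Sigma0_rmul:
  assumes "(a, b) \<in> Sigma0 \<Sigma> A" "c \<in> Omega A"
  shows "(pmul A a c, pmul A b c) \<in> Sigma0 \<Sigma> A"
proof -
  obtain B u v f \<rho> t where z: "(a, b) = (teval A (\<rho>(0 := f u)) t, teval A (\<rho>(0 := f v)) t)"
    "(B, u, v) \<in> \<Sigma> \<or> (B, v, u) \<in> \<Sigma>" "cont_hom B A f" "\<forall>i. \<rho> i \<in> Omega A"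
    by (rule Sigma0E[OF assms(1)])
  define \<rho>' where "\<rho>' = (\<lambda>i. if i = 1 then c else if i = 0 then \<rho> 0 else \<rho> (i - 1))"
  have r': "\<forall>i. \<rho>' i \<in> Omega A" using z(4) assms(2) unfolding \<rho>'_def by auto
  have "(teval A (\<rho>'(0 := f u)) (TMul (shiftt t) (TVar 1)), teval A (\<rho>'(0 := f v)) (TMul (shiftt t) (TVar 1))) \<in> Sigma0 \<Sigma> A"
    by (rule Sigma0I[OF z(2) z(3) r'])
  moreover have "\<rho>' 1 = c" unfolding \<rho>'_def by simp
  moreover have "teval A (\<rho>'(0 := f u)) (shiftt t) = teval A (\<rho>(0 := f u)) t"
    "teval A (\<rho>'(0 := f v)) (shiftt t) = teval A (\<rho>(0 := f v)) t"
    unfolding \<rho>'_def by (rule teval_shift)+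
  ultimately show ?thesis using z(1) by simp
qed

lemma PR_lmul:
  assumes sig: "SigOm \<Sigma>" and xy: "(x, y) \<in> provable_rel \<Sigma> A" and c: "c \<in> Omega A"
  shows "(pmul A c x, pmul A c y) \<in> provable_rel \<Sigma> A"
  by (rule PR_map[OF sig lmul_cont[OF c] _ xy]) (use Sigma0_lmul[OF _ c] PR_sigma0 in blast)

lemma PR_rmul:
  assumes sig: "SigOm \<Sigma>" and xy: "(x, y) \<in> provable_rel \<Sigma> A" and c: "c \<in> Omega A"
  shows "(pmul A x c, pmul A y c) \<in> provable_rel \<Sigma> A"
  by (rule PR_map[OF sig rmul_cont[OF c] _ xy]) (use Sigma0_rmul[OF _ c] PR_sigma0 in blast)




section \<open>Soundness\<close>

fun tev :: "fsg \<Rightarrow> (nat \<Rightarrow> nat) \<Rightarrow> sg_term \<Rightarrow> nat" where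
  "tev S v (TVar i) = v i"
| "tev S v (TMul a b) = snd S (tev S v a) (tev S v b)"

lemma teval_adm: "adm A S \<phi> \<Longrightarrow> teval A \<rho> t S \<phi> = tev S (\<lambda>i. \<rho> i S \<phi>) t"
  by (induction t) (simp_all add: pmul_adm)

lemma cont_hom_ev:
  assumes f: "cont_hom B A f" and a: "adm A S \<phi>"
  shows "(\<lambda>w. f w S \<phi>) \<in> Omega B \<rightarrow> fst S"
    "continuous_map (omega_top B) (discrete_topology (fst S)) (\<lambda>w. f w S \<phi>)"
    "\<forall>x\<in>Omega B. \<forall>y\<in>Omega B. f (pmul B x y) S \<phi> = snd S (f x S \<phi>) (f y S \<phi>)"
proof -
  have fP: "f \<in> Omega B \<rightarrow> Omega A" using f unfolding cont_hom_def by (rule conjunct1)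
  have fc: "continuous_map (omega_top B) (omega_top A) f" using f unfolding cont_hom_def by (elim conjE)
  have fm: "\<forall>u\<in>Omega B. \<forall>v\<in>Omega B. f (pmul B u v) = pmul A (f u) (f v)"
    using f unfolding cont_hom_def by (elim conjE)
  show "(\<lambda>w. f w S \<phi>) \<in> Omega B \<rightarrow> fst S"
  proof
    fix w assume "w \<in> Omega B"
    then have "f w \<in> Omega A" using fP by (rule funcset_mem[rotated])
    then show "f w S \<phi> \<in> fst S" using a by (rule OmegaD(1))
  qed
  show "continuous_map (omega_top B) (discrete_topology (fst S)) (\<lambda>w. f w S \<phi>)"
    using continuous_map_compose[OF fc ev_cont[OF a]] unfolding o_def .
  show "\<forall>x\<in>Omega B. \<forall>y\<in>Omega B. f (pmul B x y) S \<phi> = snd S (f x S \<phi>) (f y S \<phi>)"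
    using fm a by (simp add: pmul_adm)
qed

lemma models_holds:
  assumes "models S \<Sigma>" "(B, u, v) \<in> \<Sigma> \<or> (B, v, u) \<in> \<Sigma>"
  shows "holds_in S B u v"
proof -
  have h: "\<forall>(B, u, v) \<in> \<Sigma>. holds_in S B u v" using assms(1) unfolding models_def by (rule conjunct2)
  from assms(2) show ?thesis
  proof
    assume "(B, u, v) \<in> \<Sigma>" then show ?thesis using h by fast
  next
    assume "(B, v, u) \<in> \<Sigma>" then have "holds_in S B v u" using h by fast
    then show ?thesis unfolding holds_in_def by metis
  qed
qed

lemma sound:
  assumes sig: "SigOm \<Sigma>" and a: "adm A S \<phi>" and m: "models S \<Sigma>"
    and xy: "(x, y) \<in> provable_rel \<Sigma> A"
  shows "x S \<phi> = y S \<phi>"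
proof -
  let ?R = "{z. fst z S \<phi> = snd z S \<phi>}"
  have "provable_rel \<Sigma> A \<subseteq> ?R"
  proof (rule PR_least)
    show "Sigma0 \<Sigma> A \<subseteq> ?R"
    proof (rule subsetI)
      fix z assume "z \<in> Sigma0 \<Sigma> A"
      then obtain B u v f \<rho> t where z: "z = (teval A (\<rho>(0 := f u)) t, teval A (\<rho>(0 := f v)) t)"
        "(B, u, v) \<in> \<Sigma> \<or> (B, v, u) \<in> \<Sigma>" "cont_hom B A f" "\<forall>i. \<rho> i \<in> Omega A"
        by (rule Sigma0E)
      have uv: "u \<in> Omega B" "v \<in> Omega B" using z(2) sig unfolding SigOm_def by blast+
      have hi: "holds_in S B u v" by (rule models_holds[OF m z(2)])
      note c = cont_hom_ev[OF z(3) a]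
      have "f u S \<phi> = f v S \<phi>" using hi c unfolding holds_in_def by blast
      then have "(\<lambda>i. (\<rho>(0 := f u)) i S \<phi>) = (\<lambda>i. (\<rho>(0 := f v)) i S \<phi>)" by (auto simp: fun_upd_def)
      then show "z \<in> ?R" unfolding z(1) using a by (simp add: teval_adm)
    qed
    show "trans ?R" unfolding trans_def by simp
    have c1: "continuous_map (PTT A) (discrete_topology (fst S)) (\<lambda>z. fst z S \<phi>)"
      using continuous_map_compose[OF continuous_map_fst ev_cont[OF a]] unfolding o_def .
    have c2: "continuous_map (PTT A) (discrete_topology (fst S)) (\<lambda>z. snd z S \<phi>)"
      using continuous_map_compose[OF continuous_map_snd ev_cont[OF a]] unfolding o_def .
    have cl: "closedin (PTT A) {z \<in> topspace (PTT A). fst z S \<phi> = snd z S \<phi>}"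
      by (rule closedin_continuous_maps_eq[OF Hausdorff_space_discrete_topology c1 c2])
    have "PTT A closure_of ?R = PTT A closure_of (topspace (PTT A) \<inter> ?R)"
      by (rule closure_of_restrict)
    also have "topspace (PTT A) \<inter> ?R = {z \<in> topspace (PTT A). fst z S \<phi> = snd z S \<phi>}" by blast
    also have "PTT A closure_of \<dots> = {z \<in> topspace (PTT A). fst z S \<phi> = snd z S \<phi>}"
      using cl by (rule closure_of_closedin)
    finally show "closedR A ?R" unfolding closedR_def by blast
  qed
  from subsetD[OF this xy] show ?thesis by simp
qed

section \<open>The rectangular band of first and last letters\<close>

definition Lb :: "nat set \<Rightarrow> fsg" where
  "Lb A = (prod_encode ` (A \<times> A), \<lambda>x y. prod_encode (fst (prod_decode x), snd (prod_decode y)))"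

definition lam :: "nat set \<Rightarrow> nat \<Rightarrow> nat" where
  "lam A = restrict (\<lambda>a. prod_encode (a, a)) A"

lemma fin_sg_Lb: "finite A \<Longrightarrow> fin_sg (Lb A)"
  unfolding fin_sg_def Lb_def by auto

lemma adm_L: "finite A \<Longrightarrow> adm A (Lb A) (lam A)"
  unfolding adm_def lam_def using fin_sg_Lb by (auto simp: Lb_def)

definition fl :: "nat set \<Rightarrow> nat pw \<Rightarrow> nat" where "fl A w = w (Lb A) (lam A)"
definition fstl :: "nat set \<Rightarrow> nat pw \<Rightarrow> nat" where "fstl A w = fst (prod_decode (fl A w))"
definition lstl :: "nat set \<Rightarrow> nat pw \<Rightarrow> nat" where "lstl A w = snd (prod_decode (fl A w))"

lemma fl_in: "finite A \<Longrightarrow> w \<in> Omega A \<Longrightarrow> fl A w \<in> prod_encode ` (A \<times> A)"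
  unfolding fl_def using OmegaD(1)[OF _ adm_L] by (simp add: Lb_def)

lemma fstl_in: "finite A \<Longrightarrow> w \<in> Omega A \<Longrightarrow> fstl A w \<in> A"
  unfolding fstl_def using fl_in by fastforce

lemma lstl_in: "finite A \<Longrightarrow> w \<in> Omega A \<Longrightarrow> lstl A w \<in> A"
  unfolding lstl_def using fl_in by fastforce

lemma fl_gen: assumes A: "finite A" and a: "a \<in> A" shows "fl A (gen A a) = prod_encode (a, a)"
proof -
  have "gen A a (Lb A) (lam A) = lam A a" by (rule gen_adm[OF adm_L[OF A]])
  then show ?thesis using a by (simp add: fl_def lam_def)
qed

lemma fl_pmul: assumes A: "finite A" shows "fl A (pmul A x y) = prod_encode (fstl A x, lstl A y)"
proof -
  have "pmul A x y (Lb A) (lam A) = snd (Lb A) (x (Lb A) (lam A)) (y (Lb A) (lam A))"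
    by (rule pmul_adm[OF adm_L[OF A]])
  then show ?thesis unfolding fl_def fstl_def lstl_def by (simp add: Lb_def)
qed

lemma fl_eq: "fl A x = fl A y \<Longrightarrow> fstl A x = fstl A y \<and> lstl A x = lstl A y"
  unfolding fstl_def lstl_def by simp

lemma words_last:
  assumes A: "finite A" and t: "t \<in> words A"
  shows "t = gen A (lstl A t) \<or> (\<exists>p\<in>Omega A. t = pmul A p (gen A (lstl A t)))"
  using t
proof (induction rule: words.induct)
  case (wgen a)
  have "lstl A (gen A a) = a" unfolding lstl_def using fl_gen[OF A wgen] by simp
  then show ?case by simp
next
  case (wmul x y)
  have ly: "lstl A (pmul A x y) = lstl A y" unfolding lstl_def using fl_pmul[OF A] by (simp add: lstl_def)
  have xO: "x \<in> Omega A" "y \<in> Omega A" using words_Omega wmul by blast+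
  have bA: "lstl A y \<in> A" using lstl_in[OF A xO(2)] .
  from wmul.IH(2) show ?case
  proof
    assume "y = gen A (lstl A y)"
    then have "pmul A x y = pmul A x (gen A (lstl A (pmul A x y)))" using ly by simp
    then show ?thesis using xO by blast
  next
    assume "\<exists>p\<in>Omega A. y = pmul A p (gen A (lstl A y))"
    then obtain p where p: "p \<in> Omega A" "y = pmul A p (gen A (lstl A y))" by blast
    have "pmul A x y = pmul A (pmul A x p) (gen A (lstl A y))"
      using p pmul_assoc[OF xO(1) p(1) gen_Omega[OF bA]] by simp
    moreover have "pmul A x p \<in> Omega A" using pmul_Omega xO p by blast
    ultimately show ?thesis using ly by auto
  qed
qed

lemma words_first:
  assumes A: "finite A" and t: "t \<in> words A"
  shows "t = gen A (fstl A t) \<or> (\<exists>p\<in>Omega A. t = pmul A (gen A (fstl A t)) p)"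
  using t
proof (induction rule: words.induct)
  case (wgen a)
  have "fstl A (gen A a) = a" unfolding fstl_def using fl_gen[OF A wgen] by simp
  then show ?case by simp
next
  case (wmul x y)
  have lx: "fstl A (pmul A x y) = fstl A x" unfolding fstl_def using fl_pmul[OF A] by (simp add: fstl_def)
  have xO: "x \<in> Omega A" "y \<in> Omega A" using words_Omega wmul by blast+
  have aA: "fstl A x \<in> A" using fstl_in[OF A xO(1)] .
  from wmul.IH(1) show ?case
  proof
    assume "x = gen A (fstl A x)"
    then have "pmul A x y = pmul A (gen A (fstl A (pmul A x y))) y" using lx by simp
    then show ?thesis using xO by blast
  next
    assume "\<exists>p\<in>Omega A. x = pmul A (gen A (fstl A x)) p"
    then obtain p where p: "p \<in> Omega A" "x = pmul A (gen A (fstl A x)) p" by blast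
    have "pmul A x y = pmul A (gen A (fstl A x)) (pmul A p y)"
      using p pmul_assoc[OF gen_Omega[OF aA] p(1) xO(2)] by simp
    moreover have "pmul A p y \<in> Omega A" using pmul_Omega xO p by blast
    ultimately show ?thesis using lx by auto
  qed
qed


lemma refn_L:
  assumes "finite A" "adm A S \<phi>"
  shows "\<exists>S2 \<phi>2. adm A S2 \<phi>2 \<and> refn A S2 \<phi>2 S \<phi> \<and> refn A S2 \<phi>2 (Lb A) (lam A)"
  using prod_refn[OF assms(2) adm_L[OF assms(1)]] by blast

lemma factor_gen:
  assumes A: "finite A" and x: "x \<in> Omega A"
    and K: "compactin (omega_top A) K"
    and wK: "\<And>t. t \<in> words A \<Longrightarrow> fl A t = fl A x \<Longrightarrow> t \<in> K"
  shows "x \<in> K"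
proof (rule ccontr)
  assume nx: "x \<notin> K"
  have cK: "closedin (omega_top A) K" by (rule compactin_imp_closedin[OF Hausdorff_omega K])
  then have o: "openin (omega_top A) (Omega A - K)" unfolding closedin_def by simp
  obtain S \<phi> where S: "adm A S \<phi>" "{y \<in> Omega A. y S \<phi> = x S \<phi>} \<subseteq> Omega A - K"
    using base[OF o] x nx by blast
  obtain S2 \<phi>2 where S2: "adm A S2 \<phi>2" "refn A S2 \<phi>2 S \<phi>" "refn A S2 \<phi>2 (Lb A) (lam A)"
    using refn_L[OF A S(1)] by blast
  obtain t where t: "t \<in> words A" "t S2 \<phi>2 = x S2 \<phi>2" using dense[OF x S2(1)] by blast
  have tO: "t \<in> Omega A" using words_Omega[OF t(1)] .
  have "t S \<phi> = x S \<phi>" using S2(2) tO x t(2) unfolding refn_def by blast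
  then have "t \<notin> K" using S(2) tO by blast
  moreover have "fl A t = fl A x" using S2(3) tO x t(2) unfolding refn_def fl_def by blast
  ultimately show False using wK[OF t(1)] by blast
qed

lemma factor_last:
  assumes A: "finite A" and x: "x \<in> Omega A"
  shows "x = gen A (lstl A x) \<or> (\<exists>p\<in>Omega A. x = pmul A p (gen A (lstl A x)))"
proof -
  let ?b = "lstl A x"
  have b: "?b \<in> A" using lstl_in[OF A x] .
  let ?K = "{gen A ?b} \<union> (\<lambda>p. pmul A p (gen A ?b)) ` Omega A"
  have "compactin (omega_top A) ((\<lambda>p. pmul A p (gen A ?b)) ` topspace (omega_top A))"
    using image_compactin[OF compact_omega[unfolded compact_space_def] rmul_cont[OF gen_Omega[OF b]]] .
  then have K: "compactin (omega_top A) ?K"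
    by (intro compactin_Un) (use gen_Omega[OF b] in auto)
  have "x \<in> ?K"
  proof (rule factor_gen[OF A x K])
    fix t assume t: "t \<in> words A" "fl A t = fl A x"
    have "lstl A t = ?b" using t(2) unfolding lstl_def by simp
    then show "t \<in> ?K" using words_last[OF A t(1)] by auto
  qed
  then show ?thesis by blast
qed

lemma factor_first:
  assumes A: "finite A" and x: "x \<in> Omega A"
  shows "x = gen A (fstl A x) \<or> (\<exists>p\<in>Omega A. x = pmul A (gen A (fstl A x)) p)"
proof -
  let ?a = "fstl A x"
  have a: "?a \<in> A" using fstl_in[OF A x] .
  let ?K = "{gen A ?a} \<union> pmul A (gen A ?a) ` Omega A"
  have "compactin (omega_top A) (pmul A (gen A ?a) ` topspace (omega_top A))"
    using image_compactin[OF compact_omega[unfolded compact_space_def] lmul_cont[OF gen_Omega[OF a]]] .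
  then have K: "compactin (omega_top A) ?K"
    by (intro compactin_Un) (use gen_Omega[OF a] in auto)
  have "x \<in> ?K"
  proof (rule factor_gen[OF A x K])
    fix t assume t: "t \<in> words A" "fl A t = fl A x"
    have "fstl A t = ?a" using t(2) unfolding fstl_def by simp
    then show "t \<in> ?K" using words_first[OF A t(1)] by auto
  qed
  then show ?thesis by blast
qed




context
  fixes \<Sigma> :: "('b set \<times> 'b pw \<times> 'b pw) set" and A :: "nat set"
    and B0 :: "'b set" and l0 r0 :: "'b pw"
  assumes sig: "SigOm \<Sigma>" and finA: "finite A" and ne: "(B0, l0, r0) \<in> \<Sigma>"
    and Lmod: "models (Lb A) \<Sigma>"
    and gam: "\<And>x y. x \<in> Omega A \<Longrightarrow> y \<in> Omega A \<Longrightarrow> (pmul A (pom A (pmul A x y)) x, x) \<in> provable_rel \<Sigma> A"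
begin

lemma PS: "(x, y) \<in> provable_rel \<Sigma> A \<Longrightarrow> x \<in> Omega A \<and> y \<in> Omega A"
  using PR_sub[OF sig, of A] by blast

lemma Psym: "(x, y) \<in> provable_rel \<Sigma> A \<Longrightarrow> (y, x) \<in> provable_rel \<Sigma> A"
  by (rule PR_sym[OF sig])

lemma Ptr: "(x, y) \<in> provable_rel \<Sigma> A \<Longrightarrow> (y, z) \<in> provable_rel \<Sigma> A \<Longrightarrow> (x, z) \<in> provable_rel \<Sigma> A"
  by (rule PR_transD)

lemma Prefl: "x \<in> Omega A \<Longrightarrow> (x, x) \<in> provable_rel \<Sigma> A"
  by (rule PR_refl[OF ne])

lemma Pl: "(x, y) \<in> provable_rel \<Sigma> A \<Longrightarrow> c \<in> Omega A \<Longrightarrow> (pmul A c x, pmul A c y) \<in> provable_rel \<Sigma> A"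
  by (rule PR_lmul[OF sig])

lemma Pr: "(x, y) \<in> provable_rel \<Sigma> A \<Longrightarrow> c \<in> Omega A \<Longrightarrow> (pmul A x c, pmul A y c) \<in> provable_rel \<Sigma> A"
  by (rule PR_rmul[OF sig])

lemma Pfl: "(x, y) \<in> provable_rel \<Sigma> A \<Longrightarrow> fl A x = fl A y"
  unfolding fl_def by (rule sound[OF sig adm_L[OF finA] Lmod])

lemma Peq: "x = y \<Longrightarrow> x \<in> Omega A \<Longrightarrow> (x, y) \<in> provable_rel \<Sigma> A"
  using Prefl by simp

lemma dualG:
  assumes p: "p \<in> Omega A" and q: "q \<in> Omega A"
  shows "(pmul A p (pom A (pmul A q p)), p) \<in> provable_rel \<Sigma> A"
  using gam[OF p q] I5[OF p q] by simp

lemma F1: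
  assumes x: "x \<in> Omega A" and y: "y \<in> Omega A" and l: "lstl A x = lstl A y"
  shows "(pmul A x (pom A y), x) \<in> provable_rel \<Sigma> A"
proof -
  define b where "b = lstl A y"
  have b: "b \<in> A" unfolding b_def by (rule lstl_in[OF finA y])
  have gb: "gen A b \<in> Omega A" by (rule gen_Omega[OF b])
  have fy: "y = gen A b \<or> (\<exists>p\<in>Omega A. y = pmul A p (gen A b))"
    using factor_last[OF finA y] unfolding b_def .
  have fx: "x = gen A b \<or> (\<exists>p\<in>Omega A. x = pmul A p (gen A b))"
    using factor_last[OF finA x] unfolding b_def l .
  obtain q where q: "q \<in> Omega A" "pom A y = pom A (pmul A q (gen A b))"
    using fy
  proof
    assume "y = gen A b"
    then have "pom A y = pom A (pmul A (gen A b) (gen A b))" using I4[OF gb] by simp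
    then show ?thesis using that gb by blast
  next
    assume "\<exists>p\<in>Omega A. y = pmul A p (gen A b)"
    then obtain p where "p \<in> Omega A" "y = pmul A p (gen A b)" by blast
    then show ?thesis using that by blast
  qed
  have h1: "(pmul A (gen A b) (pom A y), gen A b) \<in> provable_rel \<Sigma> A"
    using dualG[OF gb q(1)] unfolding q(2) .
  have pyO: "pom A y \<in> Omega A" by (rule pom_Omega[OF y])
  from fx show ?thesis
  proof
    assume "x = gen A b" then show ?thesis using h1 by simp
  next
    assume "\<exists>p\<in>Omega A. x = pmul A p (gen A b)"
    then obtain p where p: "p \<in> Omega A" "x = pmul A p (gen A b)" by blast
    have "pmul A x (pom A y) = pmul A p (pmul A (gen A b) (pom A y))"
      using p pmul_assoc[OF p(1) gb pyO] by simp
    moreover have "(pmul A p (pmul A (gen A b) (pom A y)), pmul A p (gen A b)) \<in> provable_rel \<Sigma> A"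
      by (rule Pl[OF h1 p(1)])
    ultimately show ?thesis using p(2) by simp
  qed
qed

lemma F2:
  assumes x: "x \<in> Omega A" and y: "y \<in> Omega A" and l: "fstl A x = fstl A y"
  shows "(pmul A (pom A y) x, x) \<in> provable_rel \<Sigma> A"
proof -
  define a where "a = fstl A y"
  have a: "a \<in> A" unfolding a_def by (rule fstl_in[OF finA y])
  have ga: "gen A a \<in> Omega A" by (rule gen_Omega[OF a])
  have fy: "y = gen A a \<or> (\<exists>p\<in>Omega A. y = pmul A (gen A a) p)"
    using factor_first[OF finA y] unfolding a_def .
  have fx: "x = gen A a \<or> (\<exists>p\<in>Omega A. x = pmul A (gen A a) p)"
    using factor_first[OF finA x] unfolding a_def l .
  obtain q where q: "q \<in> Omega A" "pom A y = pom A (pmul A (gen A a) q)"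
    using fy
  proof
    assume "y = gen A a"
    then have "pom A y = pom A (pmul A (gen A a) (gen A a))" using I4[OF ga] by simp
    then show ?thesis using that ga by blast
  next
    assume "\<exists>p\<in>Omega A. y = pmul A (gen A a) p"
    then obtain p where "p \<in> Omega A" "y = pmul A (gen A a) p" by blast
    then show ?thesis using that by blast
  qed
  have h1: "(pmul A (pom A y) (gen A a), gen A a) \<in> provable_rel \<Sigma> A"
    using gam[OF ga q(1)] unfolding q(2) .
  have pyO: "pom A y \<in> Omega A" by (rule pom_Omega[OF y])
  from fx show ?thesis
  proof
    assume "x = gen A a" then show ?thesis using h1 by simp
  next
    assume "\<exists>p\<in>Omega A. x = pmul A (gen A a) p"
    then obtain p where p: "p \<in> Omega A" "x = pmul A (gen A a) p" by blast
    have "pmul A (pom A y) x = pmul A (pmul A (pom A y) (gen A a)) p"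
      using p pmul_assoc[OF pyO ga p(1)] by simp
    moreover have "(pmul A (pmul A (pom A y) (gen A a)) p, pmul A (gen A a) p) \<in> provable_rel \<Sigma> A"
      by (rule Pr[OF h1 p(1)])
    ultimately show ?thesis using p(2) by simp
  qed
qed

definition RR :: "fsg \<Rightarrow> (nat \<Rightarrow> nat) \<Rightarrow> (nat pw \<times> nat pw) set" where
  "RR S \<phi> = {(x, y). x \<in> Omega A \<and> y \<in> Omega A \<and>
      (\<exists>x' y'. (x, x') \<in> provable_rel \<Sigma> A \<and> x' S \<phi> = y' S \<phi> \<and> (y', y) \<in> provable_rel \<Sigma> A)}"

definition Fam :: "fsg \<Rightarrow> (nat \<Rightarrow> nat) \<Rightarrow> bool" where
  "Fam S \<phi> \<longleftrightarrow> adm A S \<phi> \<and> refn A S \<phi> (Lb A) (lam A)"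

lemma RR_iff: "(x, y) \<in> RR S \<phi> \<longleftrightarrow> x \<in> Omega A \<and> y \<in> Omega A \<and>
      (\<exists>x' y'. (x, x') \<in> provable_rel \<Sigma> A \<and> x' S \<phi> = y' S \<phi> \<and> (y', y) \<in> provable_rel \<Sigma> A)"
  unfolding RR_def by simp

lemma RR_I:
  assumes "(x, x') \<in> provable_rel \<Sigma> A" "x' S \<phi> = y' S \<phi>" "(y', y) \<in> provable_rel \<Sigma> A"
  shows "(x, y) \<in> RR S \<phi>"
proof -
  have "x \<in> Omega A" "y \<in> Omega A" using PS[OF assms(1)] PS[OF assms(3)] by auto
  then show ?thesis unfolding RR_iff using assms by blast
qed

lemma RR_E:
  assumes "(x, y) \<in> RR S \<phi>"
  obtains x' y' where "(x, x') \<in> provable_rel \<Sigma> A" "x' S \<phi> = y' S \<phi>" "(y', y) \<in> provable_rel \<Sigma> A"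
  using assms unfolding RR_iff by blast

lemma RR_Omega: "(x, y) \<in> RR S \<phi> \<Longrightarrow> x \<in> Omega A \<and> y \<in> Omega A"
  unfolding RR_iff by blast

lemma RR_refl: "x \<in> Omega A \<Longrightarrow> (x, x) \<in> RR S \<phi>"
  by (rule RR_I[OF Prefl refl Prefl])

lemma RR_sym: "(x, y) \<in> RR S \<phi> \<Longrightarrow> (y, x) \<in> RR S \<phi>"
  by (erule RR_E) (rule RR_I[OF Psym sym Psym])

lemma RR_ker: "x \<in> Omega A \<Longrightarrow> y \<in> Omega A \<Longrightarrow> x S \<phi> = y S \<phi> \<Longrightarrow> (x, y) \<in> RR S \<phi>"
  by (rule RR_I[OF Prefl _ Prefl])

lemma RR_P: "(x, y) \<in> provable_rel \<Sigma> A \<Longrightarrow> (x, y) \<in> RR S \<phi>"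
proof -
  assume xy: "(x, y) \<in> provable_rel \<Sigma> A"
  have "y \<in> Omega A" using PS[OF xy] by simp
  then have yy: "(y, y) \<in> provable_rel \<Sigma> A" by (rule Prefl)
  show ?thesis using RR_I[OF xy _ yy, of S \<phi>] by simp
qed

lemma RR_lmul:
  assumes xy: "(x, y) \<in> RR S \<phi>" and c: "c \<in> Omega A" and a: "adm A S \<phi>"
  shows "(pmul A c x, pmul A c y) \<in> RR S \<phi>"
proof -
  obtain x' y' where h: "(x, x') \<in> provable_rel \<Sigma> A" "x' S \<phi> = y' S \<phi>" "(y', y) \<in> provable_rel \<Sigma> A"
    using xy by (rule RR_E)
  show ?thesis
  proof (rule RR_I)
    show "(pmul A c x, pmul A c x') \<in> provable_rel \<Sigma> A" by (rule Pl[OF h(1) c])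
    show "pmul A c x' S \<phi> = pmul A c y' S \<phi>" using h(2) a by (simp add: pmul_adm)
    show "(pmul A c y', pmul A c y) \<in> provable_rel \<Sigma> A" by (rule Pl[OF h(3) c])
  qed
qed

lemma RR_rmul:
  assumes xy: "(x, y) \<in> RR S \<phi>" and c: "c \<in> Omega A" and a: "adm A S \<phi>"
  shows "(pmul A x c, pmul A y c) \<in> RR S \<phi>"
proof -
  obtain x' y' where h: "(x, x') \<in> provable_rel \<Sigma> A" "x' S \<phi> = y' S \<phi>" "(y', y) \<in> provable_rel \<Sigma> A"
    using xy by (rule RR_E)
  show ?thesis
  proof (rule RR_I)
    show "(pmul A x c, pmul A x' c) \<in> provable_rel \<Sigma> A" by (rule Pr[OF h(1) c])
    show "pmul A x' c S \<phi> = pmul A y' c S \<phi>" using h(2) a by (simp add: pmul_adm)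
    show "(pmul A y' c, pmul A y c) \<in> provable_rel \<Sigma> A" by (rule Pr[OF h(3) c])
  qed
qed

lemma RR_trans:
  assumes F: "Fam S \<phi>" and xy: "(x, y) \<in> RR S \<phi>" and yz: "(y, z) \<in> RR S \<phi>"
  shows "(x, z) \<in> RR S \<phi>"
proof -
  have a: "adm A S \<phi>" and rL: "refn A S \<phi> (Lb A) (lam A)" using F unfolding Fam_def by auto
  obtain x1 y1 where h1: "(x, x1) \<in> provable_rel \<Sigma> A" "x1 S \<phi> = y1 S \<phi>" "(y1, y) \<in> provable_rel \<Sigma> A"
    using xy by (rule RR_E)
  obtain x2 y2 where h2: "(y, x2) \<in> provable_rel \<Sigma> A" "x2 S \<phi> = y2 S \<phi>" "(y2, z) \<in> provable_rel \<Sigma> A"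
    using yz by (rule RR_E)
  have O: "x1 \<in> Omega A" "y1 \<in> Omega A" "x2 \<in> Omega A" "y2 \<in> Omega A"
    using PS[OF h1(1)] PS[OF h1(3)] PS[OF h2(1)] PS[OF h2(3)] by auto
  have y1x2: "(y1, x2) \<in> provable_rel \<Sigma> A" by (rule Ptr[OF h1(3) h2(1)])
  have fl1: "fl A x1 = fl A y1" unfolding fl_def by (rule rL[unfolded refn_def, rule_format, OF O(1) O(2) h1(2)])
  have fl2: "fl A y1 = fl A x2" by (rule Pfl[OF y1x2])
  have fl3: "fl A x2 = fl A y2" unfolding fl_def by (rule rL[unfolded refn_def, rule_format, OF O(3) O(4) h2(2)])
  define zz where "zz = pom1 A y1"
  have zz: "zz \<in> Omega A" unfolding zz_def by (rule pom1_Omega[OF O(2)])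
  define W where "W = pmul A (pmul A x1 zz) x2"
  define W' where "W' = pmul A (pmul A y1 zz) y2"
  have x1zz: "pmul A x1 zz \<in> Omega A" by (rule pmul_Omega[OF O(1) zz])
  have y1zz: "pmul A y1 zz \<in> Omega A" by (rule pmul_Omega[OF O(2) zz])
  have WW: "W S \<phi> = W' S \<phi>" unfolding W_def W'_def using h1(2) h2(2) a by (simp add: pmul_adm)
  have "(W, pmul A (pmul A x1 zz) y1) \<in> provable_rel \<Sigma> A"
    unfolding W_def by (rule Pl[OF Psym[OF y1x2] x1zz])
  moreover have "pmul A (pmul A x1 zz) y1 = pmul A x1 (pom A y1)"
    using pmul_assoc[OF O(1) zz O(2)] I3[OF O(2)] unfolding zz_def by simp
  moreover have "(pmul A x1 (pom A y1), x1) \<in> provable_rel \<Sigma> A"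
    by (rule F1[OF O(1) O(2)]) (use fl_eq[OF fl1] in blast)
  ultimately have W1: "(W, x1) \<in> provable_rel \<Sigma> A" by (metis Ptr)
  have "W' = pmul A (pom A y1) y2" unfolding W'_def zz_def using I2[OF O(2)] by simp
  moreover have "(pmul A (pom A y1) y2, y2) \<in> provable_rel \<Sigma> A"
    by (rule F2[OF O(4) O(2)]) (use fl_eq[OF fl2] fl_eq[OF fl3] in simp)
  ultimately have W2: "(W', y2) \<in> provable_rel \<Sigma> A" by simp
  show ?thesis
  proof (rule RR_I)
    show "(x, W) \<in> provable_rel \<Sigma> A" by (rule Ptr[OF h1(1) Psym[OF W1]])
    show "W S \<phi> = W' S \<phi>" by (rule WW)
    show "(W', z) \<in> provable_rel \<Sigma> A" by (rule Ptr[OF W2 h2(3)])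
  qed
qed

lemma P_closedin: "closedin (PTT A) (provable_rel \<Sigma> A)"
proof -
  have "provable_rel \<Sigma> A \<subseteq> topspace (PTT A)" using PR_sub[OF sig, of A] by simp
  moreover have "PTT A closure_of provable_rel \<Sigma> A \<subseteq> provable_rel \<Sigma> A"
    using PR_closed[of A \<Sigma>] unfolding closedR_def .
  ultimately show ?thesis using closure_of_subset_eq by blast
qed

lemma sect_closed1: "u \<in> Omega A \<Longrightarrow> closedin (omega_top A) {x \<in> Omega A. (u, x) \<in> provable_rel \<Sigma> A}"
proof -
  assume u: "u \<in> Omega A"
  have cu: "continuous_map (omega_top A) (omega_top A) (\<lambda>x. u)" using u by simp
  have c: "continuous_map (omega_top A) (PTT A) (\<lambda>x. (u, x))"
    using continuous_map_pairedI[OF cu continuous_map_id] by (simp add: id_def)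
  show ?thesis using closedin_continuous_map_preimage[OF c P_closedin] by simp
qed

lemma sect_closed2: "v \<in> Omega A \<Longrightarrow> closedin (omega_top A) {x \<in> Omega A. (x, v) \<in> provable_rel \<Sigma> A}"
proof -
  assume v: "v \<in> Omega A"
  have cv: "continuous_map (omega_top A) (omega_top A) (\<lambda>x. v)" using v by simp
  have c: "continuous_map (omega_top A) (PTT A) (\<lambda>x. (x, v))"
    using continuous_map_pairedI[OF continuous_map_id cv] by (simp add: id_def)
  show ?thesis using closedin_continuous_map_preimage[OF c P_closedin] by simp
qed

lemma common_refn:
  assumes "finite F" "F \<subseteq> {i. adm A (fst i) (snd i)}"
  shows "\<exists>S \<phi>. Fam S \<phi> \<and> (\<forall>i\<in>F. refn A S \<phi> (fst i) (snd i))"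
  using assms
proof (induction F rule: finite_induct)
  case empty
  have "Fam (Lb A) (lam A)" unfolding Fam_def using adm_L[OF finA] refn_refl by blast
  then show ?case by blast
next
  case (insert i F)
  then obtain S \<phi> where S: "Fam S \<phi>" "\<forall>j\<in>F. refn A S \<phi> (fst j) (snd j)" by blast
  have ai: "adm A (fst i) (snd i)" using insert.prems by blast
  have aS: "adm A S \<phi>" and rL: "refn A S \<phi> (Lb A) (lam A)" using S(1) unfolding Fam_def by auto
  obtain S2 \<phi>2 where S2: "adm A S2 \<phi>2" "refn A S2 \<phi>2 S \<phi>" "refn A S2 \<phi>2 (fst i) (snd i)"
    using prod_refn[OF aS ai] by blast
  have "Fam S2 \<phi>2" unfolding Fam_def using S2(1) refn_trans[OF S2(2) rL] by blast
  moreover have "\<forall>j\<in>insert i F. refn A S2 \<phi>2 (fst j) (snd j)"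
    using S(2) S2(3) refn_trans[OF S2(2)] by blast
  ultimately show ?case by blast
qed

definition DD :: "nat pw \<Rightarrow> nat pw \<Rightarrow> fsg \<times> (nat \<Rightarrow> nat) \<Rightarrow> nat pw set" where
  "DD u v i = {x \<in> Omega A. (u, x) \<in> provable_rel \<Sigma> A \<and>
     (\<exists>y\<in>Omega A. x (fst i) (snd i) = y (fst i) (snd i) \<and> (y, v) \<in> provable_rel \<Sigma> A)}"

lemma DD_closed:
  assumes u: "u \<in> Omega A" and a: "adm A (fst i) (snd i)"
  shows "closedin (omega_top A) (DD u v i)"
proof -
  let ?C = "{x \<in> Omega A. \<exists>y\<in>Omega A. x (fst i) (snd i) = y (fst i) (snd i) \<and> (y, v) \<in> provable_rel \<Sigma> A}"
  have "sat A (fst i) (snd i) ?C" unfolding sat_def by auto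
  then have c2: "closedin (omega_top A) ?C" by (rule sat_closed[OF a])
  have "DD u v i = {x \<in> Omega A. (u, x) \<in> provable_rel \<Sigma> A} \<inter> ?C" unfolding DD_def by blast
  then show ?thesis using closedin_Int[OF sect_closed1[OF u] c2] by simp
qed

lemma key:
  assumes u: "u \<in> Omega A" and v: "v \<in> Omega A"
    and all: "\<And>S \<phi>. Fam S \<phi> \<Longrightarrow> (u, v) \<in> RR S \<phi>"
  shows "(u, v) \<in> provable_rel \<Sigma> A"
proof -
  let ?I = "{i. Fam (fst i) (snd i)}"
  let ?U = "DD u v ` ?I"
  have Iadm: "?I \<subseteq> {i. adm A (fst i) (snd i)}" unfolding Fam_def by blast
  have L: "(Lb A, lam A) \<in> ?I" unfolding Fam_def using adm_L[OF finA] refn_refl by simp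
  have cl: "\<forall>C\<in>?U. closedin (omega_top A) C"
  proof
    fix C assume "C \<in> ?U"
    then obtain i where i: "i \<in> ?I" "C = DD u v i" by blast
    have "adm A (fst i) (snd i)" using i(1) unfolding Fam_def by simp
    then show "closedin (omega_top A) C" unfolding i(2) by (rule DD_closed[OF u])
  qed
  have fip: "\<forall>F. finite F \<and> F \<subseteq> ?U \<longrightarrow> \<Inter> F \<noteq> {}"
  proof (intro allI impI)
    fix F assume F: "finite F \<and> F \<subseteq> ?U"
    then obtain F' where F': "F' \<subseteq> ?I" "finite F'" "F = DD u v ` F'"
      by (meson finite_subset_image)
    obtain S \<phi> where S: "Fam S \<phi>" "\<forall>i\<in>F'. refn A S \<phi> (fst i) (snd i)"
      using common_refn[OF F'(2)] F'(1) Iadm by blast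
    obtain x' y' where h: "(u, x') \<in> provable_rel \<Sigma> A" "x' S \<phi> = y' S \<phi>" "(y', v) \<in> provable_rel \<Sigma> A"
      using all[OF S(1)] by (rule RR_E)
    have xO: "x' \<in> Omega A" "y' \<in> Omega A" using PS[OF h(1)] PS[OF h(3)] by auto
    have "x' \<in> DD u v i" if "i \<in> F'" for i
    proof -
      have "x' (fst i) (snd i) = y' (fst i) (snd i)"
        using S(2) that xO h(2) unfolding refn_def by blast
      then show ?thesis unfolding DD_def using xO h by blast
    qed
    then have "x' \<in> \<Inter> F" using F'(3) by blast
    then show "\<Inter> F \<noteq> {}" by blast
  qed
  have "\<Inter> ?U \<noteq> {}"
    using compact_omega[unfolded compact_space_fip, rule_format, of ?U] cl fip by blast
  then obtain x where x: "x \<in> \<Inter> ?U" by blast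
  have "DD u v (Lb A, lam A) \<in> ?U" using L by (rule imageI)
  then have xDL: "x \<in> DD u v (Lb A, lam A)" using x by (rule InterD[rotated])
  have xO: "x \<in> Omega A" and ux: "(u, x) \<in> provable_rel \<Sigma> A" using xDL unfolding DD_def by auto
  have "(x, v) \<in> provable_rel \<Sigma> A"
  proof (rule ccontr)
    assume nx: "(x, v) \<notin> provable_rel \<Sigma> A"
    let ?V = "{y \<in> Omega A. (y, v) \<in> provable_rel \<Sigma> A}"
    have "openin (omega_top A) (Omega A - ?V)"
      using sect_closed2[OF v] unfolding closedin_def by simp
    moreover have "x \<in> Omega A - ?V" using xO nx by blast
    ultimately obtain S1 \<phi>1 where S1: "adm A S1 \<phi>1" "{y \<in> Omega A. y S1 \<phi>1 = x S1 \<phi>1} \<subseteq> Omega A - ?V"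
      using base by blast
    obtain S \<phi> where S: "Fam S \<phi>" "\<forall>i\<in>{(S1, \<phi>1)}. refn A S \<phi> (fst i) (snd i)"
      using common_refn[of "{(S1, \<phi>1)}"] S1(1) by auto
    have r: "refn A S \<phi> S1 \<phi>1" using S(2) by simp
    have "(S, \<phi>) \<in> ?I" using S(1) by simp
    then have "DD u v (S, \<phi>) \<in> ?U" by (rule imageI)
    then have "x \<in> DD u v (S, \<phi>)" using x by (rule InterD[rotated])
    then obtain y where y: "y \<in> Omega A" "x S \<phi> = y S \<phi>" "(y, v) \<in> provable_rel \<Sigma> A"
      unfolding DD_def by auto
    have "x S1 \<phi>1 = y S1 \<phi>1" using r xO y unfolding refn_def by blast
    then have "y \<in> Omega A - ?V" using S1(2) y(1) by auto
    then show False using y by blast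
  qed
  then show ?thesis by (rule Ptr[OF ux])
qed

lemma quotient_model:
  assumes F: "Fam S \<phi>" and u: "u \<in> Omega A" and v: "v \<in> Omega A" and nuv: "(u, v) \<notin> RR S \<phi>"
  shows "\<exists>T. models T \<Sigma> \<and> \<not> holds_in T A u v"
proof -
  have a: "adm A S \<phi>" using F unfolding Fam_def by simp
  have fS: "finite (fst S)" using fin_sgD(1)[OF admD(1)[OF a]] .
  define rep where "rep x = Min ((\<lambda>y. y S \<phi>) ` {y \<in> Omega A. (x, y) \<in> RR S \<phi>})" for x
  have rep_mem: "\<exists>y. y \<in> Omega A \<and> (x, y) \<in> RR S \<phi> \<and> rep x = y S \<phi>" if x: "x \<in> Omega A" for x
  proof -
    have sub: "(\<lambda>y. y S \<phi>) ` {y \<in> Omega A. (x, y) \<in> RR S \<phi>} \<subseteq> fst S"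
      using OmegaD(1)[OF _ a] by blast
    have fin: "finite ((\<lambda>y. y S \<phi>) ` {y \<in> Omega A. (x, y) \<in> RR S \<phi>})"
      by (rule finite_subset[OF sub fS])
    have "x \<in> {y \<in> Omega A. (x, y) \<in> RR S \<phi>}" using x RR_refl[OF x] by simp
    then have ne: "(\<lambda>y. y S \<phi>) ` {y \<in> Omega A. (x, y) \<in> RR S \<phi>} \<noteq> {}" by blast
    have "rep x \<in> (\<lambda>y. y S \<phi>) ` {y \<in> Omega A. (x, y) \<in> RR S \<phi>}"
      unfolding rep_def by (rule Min_in[OF fin ne])
    then show ?thesis by blast
  qed
  have rep_S: "rep x \<in> fst S" if "x \<in> Omega A" for x
    using rep_mem[OF that] OmegaD(1)[OF _ a] by metis
  have rep_eq: "rep x = rep y \<longleftrightarrow> (x, y) \<in> RR S \<phi>" if x: "x \<in> Omega A" and y: "y \<in> Omega A" for x y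
  proof
    assume e: "rep x = rep y"
    obtain z1 where z1: "z1 \<in> Omega A" "(x, z1) \<in> RR S \<phi>" "rep x = z1 S \<phi>" using rep_mem[OF x] by blast
    obtain z2 where z2: "z2 \<in> Omega A" "(y, z2) \<in> RR S \<phi>" "rep y = z2 S \<phi>" using rep_mem[OF y] by blast
    have "(z1, z2) \<in> RR S \<phi>" using RR_ker[OF z1(1) z2(1)] e z1(3) z2(3) by simp
    then have "(x, z2) \<in> RR S \<phi>" by (rule RR_trans[OF F z1(2)])
    then show "(x, y) \<in> RR S \<phi>" by (rule RR_trans[OF F _ RR_sym[OF z2(2)]])
  next
    assume xy: "(x, y) \<in> RR S \<phi>"
    have "{z \<in> Omega A. (x, z) \<in> RR S \<phi>} = {z \<in> Omega A. (y, z) \<in> RR S \<phi>}"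
      using RR_trans[OF F] RR_sym xy by blast
    then show "rep x = rep y" unfolding rep_def by simp
  qed
  define C where "C = rep ` Omega A"
  define sel where "sel c = (SOME x. x \<in> Omega A \<and> rep x = c)" for c
  have sel: "sel c \<in> Omega A \<and> rep (sel c) = c" if "c \<in> C" for c
  proof -
    have "\<exists>x. x \<in> Omega A \<and> rep x = c" using that unfolding C_def by blast
    then show ?thesis unfolding sel_def by (rule someI_ex)
  qed
  define mT where "mT a b = rep (pmul A (sel a) (sel b))" for a b
  define T where "T = (C, mT)"
  have fT: "fst T = C" and sT: "snd T = mT" unfolding T_def by simp_all
  have rep_mul: "rep (pmul A x y) = mT (rep x) (rep y)" if x: "x \<in> Omega A" and y: "y \<in> Omega A" for x y
  proof -
    have cx: "rep x \<in> C" "rep y \<in> C" unfolding C_def using x y by blast+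
    have s1: "sel (rep x) \<in> Omega A" "rep (sel (rep x)) = rep x" using sel[OF cx(1)] by auto
    have s2: "sel (rep y) \<in> Omega A" "rep (sel (rep y)) = rep y" using sel[OF cx(2)] by auto
    have r1: "(sel (rep x), x) \<in> RR S \<phi>" using rep_eq[OF s1(1) x] s1(2) by simp
    have r2: "(sel (rep y), y) \<in> RR S \<phi>" using rep_eq[OF s2(1) y] s2(2) by simp
    have "(pmul A (sel (rep x)) (sel (rep y)), pmul A x (sel (rep y))) \<in> RR S \<phi>"
      by (rule RR_rmul[OF r1 s2(1) a])
    moreover have "(pmul A x (sel (rep y)), pmul A x y) \<in> RR S \<phi>"
      by (rule RR_lmul[OF r2 x a])
    ultimately have "(pmul A (sel (rep x)) (sel (rep y)), pmul A x y) \<in> RR S \<phi>"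
      by (rule RR_trans[OF F])
    moreover have "pmul A (sel (rep x)) (sel (rep y)) \<in> Omega A" by (rule pmul_Omega[OF s1(1) s2(1)])
    moreover have "pmul A x y \<in> Omega A" by (rule pmul_Omega[OF x y])
    ultimately have "rep (pmul A (sel (rep x)) (sel (rep y))) = rep (pmul A x y)" using rep_eq by blast
    then show ?thesis unfolding mT_def by simp
  qed
  have finT: "fin_sg T"
    unfolding fin_sg_def fT sT
  proof (intro conjI ballI)
    show "finite C" unfolding C_def using rep_S finite_subset[OF _ fS] by blast
    fix x y assume x: "x \<in> C" and y: "y \<in> C"
    show "mT x y \<in> C" unfolding mT_def C_def using sel[OF x] sel[OF y] pmul_Omega by blast
    fix z assume z: "z \<in> C"
    obtain xa ya za where e: "xa \<in> Omega A" "x = rep xa" "ya \<in> Omega A" "y = rep ya" "za \<in> Omega A" "z = rep za"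
      using x y z unfolding C_def by blast
    have p1: "pmul A xa ya \<in> Omega A" by (rule pmul_Omega[OF e(1) e(3)])
    have p2: "pmul A ya za \<in> Omega A" by (rule pmul_Omega[OF e(3) e(5)])
    have "mT (mT x y) z = mT (rep (pmul A xa ya)) (rep za)" unfolding e(2,4,6) rep_mul[OF e(1) e(3)] ..
    also have "\<dots> = rep (pmul A (pmul A xa ya) za)" by (rule rep_mul[OF p1 e(5), symmetric])
    also have "\<dots> = rep (pmul A xa (pmul A ya za))" by (simp only: pmul_assoc[OF e(1) e(3) e(5)])
    also have "\<dots> = mT (rep xa) (rep (pmul A ya za))" by (rule rep_mul[OF e(1) p2])
    also have "\<dots> = mT x (mT y z)" unfolding e(2,4,6) rep_mul[OF e(3) e(5)] ..
    finally show "mT (mT x y) z = mT x (mT y z)" .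
  qed
  have repP: "rep \<in> Omega A \<rightarrow> C" unfolding C_def by blast
  have repc: "continuous_map (omega_top A) (discrete_topology C) rep"
  proof (rule cont_disc[OF a repP])
    fix x y assume "x \<in> Omega A" "y \<in> Omega A" "x S \<phi> = y S \<phi>"
    then show "rep x = rep y" using rep_eq RR_ker by blast
  qed
  have reph: "\<forall>x\<in>Omega A. \<forall>y\<in>Omega A. rep (pmul A x y) = mT (rep x) (rep y)" using rep_mul by blast
  have nh: "\<not> holds_in T A u v"
  proof
    assume "holds_in T A u v"
    then have "rep u = rep v" unfolding holds_in_def fT sT using repP repc reph by blast
    then show False using nuv rep_eq[OF u v] by simp
  qed
  have "models T \<Sigma>" unfolding models_def
  proof (intro conjI ballI)
    show "fin_sg T" by (rule finT)
    fix z assume z: "z \<in> \<Sigma>"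
    obtain B l r where zz: "z = (B, l, r)" by (cases z)
    have blr: "(B, l, r) \<in> \<Sigma>" using z zz by simp
    have lr: "l \<in> Omega B" "r \<in> Omega B" using blr sig unfolding SigOm_def by blast+
    have "holds_in T B l r" unfolding holds_in_def fT sT
    proof (intro allI impI)
      fix h assume h: "h \<in> Omega B \<rightarrow> C \<and> continuous_map (omega_top B) (discrete_topology C) h \<and>
          (\<forall>x\<in>Omega B. \<forall>y\<in>Omega B. h (pmul B x y) = mT (h x) (h y))"
      have hP: "h \<in> Omega B \<rightarrow> C" and hc: "continuous_map (omega_top B) (discrete_topology C) h"
        and hm: "\<forall>x\<in>Omega B. \<forall>y\<in>Omega B. h (pmul B x y) = mT (h x) (h y)" using h by auto
      define g where "g b = sel (h (gen B b))" for b
      have gO: "\<forall>b\<in>B. g b \<in> Omega A"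
      proof
        fix b assume b: "b \<in> B"
        have "h (gen B b) \<in> C" using hP gen_Omega[OF b] by blast
        then show "g b \<in> Omega A" unfolding g_def using sel by blast
      qed
      define f where "f = substf A B g"
      have fO: "f w \<in> Omega A" if "w \<in> Omega B" for w unfolding f_def by (rule substf_Omega[OF gO that])
      have fc: "continuous_map (omega_top B) (omega_top A) f" unfolding f_def by (rule substf_cont[OF gO])
      have fm: "f (pmul B x y) = pmul A (f x) (f y)" if "x \<in> Omega B" "y \<in> Omega B" for x y
        unfolding f_def by (rule substf_pmul[OF gO that])
      have fg: "f (gen B b) = g b" if "b \<in> B" for b unfolding f_def by (rule substf_gen[OF gO that])
      have ch: "cont_hom B A f" unfolding f_def by (rule substf_cont_hom[OF gO])
      define k where "k w = rep (f w)" for w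
      have kP: "k \<in> Omega B \<rightarrow> fst T" unfolding fT k_def using fO repP by blast
      have kc: "continuous_map (omega_top B) (discrete_topology (fst T)) k"
        unfolding fT k_def using continuous_map_compose[OF fc repc] unfolding o_def .
      have km: "\<forall>x\<in>Omega B. \<forall>y\<in>Omega B. k (pmul B x y) = snd T (k x) (k y)"
        unfolding sT k_def using fm fO rep_mul by simp
      have hP': "h \<in> Omega B \<rightarrow> fst T" using hP unfolding fT .
      have hc': "continuous_map (omega_top B) (discrete_topology (fst T)) h" using hc unfolding fT .
      have hm': "\<forall>x\<in>Omega B. \<forall>y\<in>Omega B. h (pmul B x y) = snd T (h x) (h y)" using hm unfolding sT .
      have rs: "restrict (k \<circ> gen B) B = restrict (h \<circ> gen B) B"
      proof (rule restrict_ext)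
        fix b assume b: "b \<in> B"
        have "h (gen B b) \<in> C" using hP gen_Omega[OF b] by blast
        then show "(k \<circ> gen B) b = (h \<circ> gen B) b"
          unfolding k_def o_def fg[OF b] g_def using sel by blast
      qed
      have hk: "h w = k w" if "w \<in> Omega B" for w
        using hom_ev[OF finT hP' hc' hm' that] hom_ev[OF finT kP kc km that] rs by simp
      have "(teval A ((\<lambda>_. u)(0 := f l)) (TVar 0), teval A ((\<lambda>_. u)(0 := f r)) (TVar 0)) \<in> Sigma0 \<Sigma> A"
        by (rule Sigma0I[OF disjI1[OF blr] ch]) (use u in simp)
      then have "(f l, f r) \<in> Sigma0 \<Sigma> A" by simp
      then have "(f l, f r) \<in> provable_rel \<Sigma> A" using PR_sigma0 by (rule subsetD[rotated])
      then have "(f l, f r) \<in> RR S \<phi>" by (rule RR_P)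
      then have "k l = k r" unfolding k_def using rep_eq[OF fO[OF lr(1)] fO[OF lr(2)]] by simp
      then show "h l = h r" using hk lr by simp
    qed
    then show "case z of (B, u, v) \<Rightarrow> holds_in T B u v" using zz by simp
  qed
  then show ?thesis using nh by blast
qed

lemma complete:
  assumes u: "u \<in> Omega A" and v: "v \<in> Omega A"
    and val: "\<forall>T. models T \<Sigma> \<longrightarrow> holds_in T A u v"
  shows "(u, v) \<in> provable_rel \<Sigma> A"
proof (rule key[OF u v])
  fix S \<phi> assume F: "Fam S \<phi>"
  show "(u, v) \<in> RR S \<phi>"
  proof (rule ccontr)
    assume "(u, v) \<notin> RR S \<phi>"
    then obtain T where "models T \<Sigma>" "\<not> holds_in T A u v" using quotient_model[OF F u v] by blast
    then show False using val by blast
  qed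
qed

end


lemma h_strong_gen:
  assumes sig: "SigOm \<Sigma>" and ne: "(B0, l0, r0) \<in> \<Sigma>"
    and Lm: "\<And>A. finite A \<Longrightarrow> models (Lb A) \<Sigma>"
    and gam: "\<And>(A :: nat set) x y. finite A \<Longrightarrow> x \<in> Omega A \<Longrightarrow> y \<in> Omega A \<Longrightarrow>
        (pmul A (pom A (pmul A x y)) x, x) \<in> provable_rel \<Sigma> A"
  shows "h_strong \<Sigma>"
  unfolding h_strong_def
proof (intro allI impI)
  fix A :: "nat set" and u v
  assume h: "finite A \<and> u \<in> Omega A \<and> v \<in> Omega A \<and> (\<forall>T. models T \<Sigma> \<longrightarrow> holds_in T A u v)"
  then have A: "finite A" by simp
  show "(u, v) \<in> provable_rel \<Sigma> A"
    by (rule complete[OF sig A ne Lm[OF A] gam[OF A]]) (use h in auto)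
qed




lemma Bxy01: "(0::nat) \<in> Bxy" "(1::nat) \<in> Bxy" unfolding Bxy_def by simp_all

abbreviation gx where "gx \<equiv> gen Bxy (0::nat)"
abbreviation gy where "gy \<equiv> gen Bxy (1::nat)"

lemma gxy_Omega: "gx \<in> Omega Bxy" "gy \<in> Omega Bxy"
  using gen_Omega[OF Bxy01(1)] gen_Omega[OF Bxy01(2)] by auto

lemma SigmaPI_eq: "SigmaPI = {(Bxy, pom Bxy (pmul Bxy (pmul Bxy gx gy) gx), pom Bxy gx),
      (Bxy, pmul Bxy (pom Bxy gx) gx, gx)}"
  unfolding SigmaPI_def Let_def
  using omega_eq[OF gxy_Omega(1)] omega_eq[OF pmul_Omega[OF pmul_Omega[OF gxy_Omega] gxy_Omega(1)]]
  by simp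

lemma GammaPI_eq: "GammaPI = {(Bxy, pmul Bxy (pom Bxy (pmul Bxy gx gy)) gx, gx)}"
  unfolding GammaPI_def Let_def
  using omega_eq[OF pmul_Omega[OF gxy_Omega]] by simp

lemma SigOm_SigmaPI: "SigOm SigmaPI"
  unfolding SigOm_def SigmaPI_eq
  using gxy_Omega by (auto intro!: pom_Omega pmul_Omega)

lemma SigOm_GammaPI: "SigOm GammaPI"
  unfolding SigOm_def GammaPI_eq
  using gxy_Omega by (auto intro!: pom_Omega pmul_Omega)

lemma Lb_mul: "snd (Lb A) x y = prod_encode (fst (prod_decode x), snd (prod_decode y))"
  by (simp add: Lb_def)

lemma Lb_idem: "x \<in> fst (Lb A) \<Longrightarrow> snd (Lb A) x x = x"
  by (auto simp: Lb_def)

lemma Lb_xyx: "x \<in> fst (Lb A) \<Longrightarrow> snd (Lb A) (snd (Lb A) x y) x = x"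
  by (auto simp: Lb_def)

lemma spw_idem: "snd S s s = s \<Longrightarrow> spw S s n = s"
  by (induction n) simp_all

lemma band_holds:
  assumes T: "fin_sg T" and l: "l \<in> Omega B" and r: "r \<in> Omega B"
    and e: "\<And>\<psi>. adm B T \<psi> \<Longrightarrow> l T \<psi> = r T \<psi>"
  shows "holds_in T B l r"
  unfolding holds_in_def
proof (intro allI impI)
  fix h assume h: "h \<in> Omega B \<rightarrow> fst T \<and> continuous_map (omega_top B) (discrete_topology (fst T)) h \<and>
      (\<forall>x\<in>Omega B. \<forall>y\<in>Omega B. h (pmul B x y) = snd T (h x) (h y))"
  have hP: "h \<in> Omega B \<rightarrow> fst T" using h by simp
  have "h (gen B b) \<in> fst T" if "b \<in> B" for b using hP gen_Omega[OF that] by blast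
  then have a: "adm B T (restrict (h \<circ> gen B) B)" using T unfolding adm_def by auto
  have "h l = l T (restrict (h \<circ> gen B) B)" using hom_ev[OF T hP _ _ l] h by blast
  moreover have "h r = r T (restrict (h \<circ> gen B) B)" using hom_ev[OF T hP _ _ r] h by blast
  ultimately show "h l = h r" using e[OF a] by simp
qed

lemma Lb_models_Sigma: assumes A: "finite A" shows "models (Lb A) SigmaPI"
  unfolding models_def
proof (intro conjI ballI)
  let ?L = "Lb A"
  show fL: "fin_sg ?L" by (rule fin_sg_Lb[OF A])
  have gO: "gx \<in> Omega Bxy" "gy \<in> Omega Bxy" by (rule gxy_Omega)+
  fix z assume z: "z \<in> SigmaPI"
  have vals: "gx ?L \<psi> \<in> fst ?L" "gy ?L \<psi> \<in> fst ?L" if "adm Bxy ?L \<psi>" for \<psi>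
    using OmegaD(1)[OF gO(1) that] OmegaD(1)[OF gO(2) that] by auto
  have h1: "holds_in ?L Bxy (pom Bxy (pmul Bxy (pmul Bxy gx gy) gx)) (pom Bxy gx)"
  proof (rule band_holds[OF fL])
    show "pom Bxy (pmul Bxy (pmul Bxy gx gy) gx) \<in> Omega Bxy" "pom Bxy gx \<in> Omega Bxy"
      by (intro pom_Omega pmul_Omega gO)+
    fix \<psi> assume a: "adm Bxy ?L \<psi>"
    have xyx: "snd ?L (snd ?L (gx ?L \<psi>) (gy ?L \<psi>)) (gx ?L \<psi>) = gx ?L \<psi>" by (rule Lb_xyx[OF vals(1)[OF a]])
    have idx: "snd ?L (gx ?L \<psi>) (gx ?L \<psi>) = gx ?L \<psi>" by (rule Lb_idem[OF vals(1)[OF a]])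
    show "pom Bxy (pmul Bxy (pmul Bxy gx gy) gx) ?L \<psi> = pom Bxy gx ?L \<psi>"
      using a xyx spw_idem[OF idx] by (simp add: pom_adm pmul_adm)
  qed
  have h2: "holds_in ?L Bxy (pmul Bxy (pom Bxy gx) gx) gx"
  proof (rule band_holds[OF fL])
    show "pmul Bxy (pom Bxy gx) gx \<in> Omega Bxy" "gx \<in> Omega Bxy"
      by (intro pom_Omega pmul_Omega gO)+
    fix \<psi> assume a: "adm Bxy ?L \<psi>"
    have idx: "snd ?L (gx ?L \<psi>) (gx ?L \<psi>) = gx ?L \<psi>" by (rule Lb_idem[OF vals(1)[OF a]])
    show "pmul Bxy (pom Bxy gx) gx ?L \<psi> = gx ?L \<psi>"
      using a spw_idem[OF idx] idx by (simp add: pom_adm pmul_adm)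
  qed
  show "case z of (B, u, v) \<Rightarrow> holds_in ?L B u v"
    using z h1 h2 unfolding SigmaPI_eq by auto
qed

lemma Lb_models_Gamma: assumes A: "finite A" shows "models (Lb A) GammaPI"
  unfolding models_def
proof (intro conjI ballI)
  let ?L = "Lb A"
  show fL: "fin_sg ?L" by (rule fin_sg_Lb[OF A])
  have gO: "gx \<in> Omega Bxy" "gy \<in> Omega Bxy" by (rule gxy_Omega)+
  fix z assume z: "z \<in> GammaPI"
  have vals: "gx ?L \<psi> \<in> fst ?L" "gy ?L \<psi> \<in> fst ?L" if "adm Bxy ?L \<psi>" for \<psi>
    using OmegaD(1)[OF gO(1) that] OmegaD(1)[OF gO(2) that] by auto
  have h1: "holds_in ?L Bxy (pmul Bxy (pom Bxy (pmul Bxy gx gy)) gx) gx"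
  proof (rule band_holds[OF fL])
    show "pmul Bxy (pom Bxy (pmul Bxy gx gy)) gx \<in> Omega Bxy" "gx \<in> Omega Bxy"
      by (intro pom_Omega pmul_Omega gO)+
    fix \<psi> assume a: "adm Bxy ?L \<psi>"
    let ?s = "snd ?L (gx ?L \<psi>) (gy ?L \<psi>)"
    have sL: "?s \<in> fst ?L" using vals[OF a] fin_sgD(2)[OF fL] by blast
    have ids: "snd ?L ?s ?s = ?s" by (rule Lb_idem[OF sL])
    have xyx: "snd ?L ?s (gx ?L \<psi>) = gx ?L \<psi>" by (rule Lb_xyx[OF vals(1)[OF a]])
    show "pmul Bxy (pom Bxy (pmul Bxy gx gy)) gx ?L \<psi> = gx ?L \<psi>"
      using a spw_idem[OF ids] xyx by (simp add: pom_adm pmul_adm)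
  qed
  show "case z of (B, u, v) \<Rightarrow> holds_in ?L B u v"
    using z h1 unfolding GammaPI_eq by auto
qed


definition gpq :: "'a pw \<Rightarrow> 'a pw \<Rightarrow> nat \<Rightarrow> 'a pw" where
  "gpq p q = (\<lambda>b. if b = 0 then p else q)"

lemma gpq_Omega: "p \<in> Omega A \<Longrightarrow> q \<in> Omega A \<Longrightarrow> \<forall>b\<in>Bxy. gpq p q b \<in> Omega A"
  unfolding gpq_def by simp

lemma sub_gx: "p \<in> Omega A \<Longrightarrow> q \<in> Omega A \<Longrightarrow> substf A Bxy (gpq p q) gx = p"
  using substf_gen[OF gpq_Omega Bxy01(1)] unfolding gpq_def by simp

lemma sub_gy: "p \<in> Omega A \<Longrightarrow> q \<in> Omega A \<Longrightarrow> substf A Bxy (gpq p q) gy = q"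
  using substf_gen[OF gpq_Omega Bxy01(2)] unfolding gpq_def by simp

lemma sigma0_pair:
  assumes "(B, l, r) \<in> \<Sigma>" "cont_hom B A f" "w \<in> Omega A"
  shows "(f l, f r) \<in> provable_rel \<Sigma> A"
proof -
  have "(teval A ((\<lambda>_. w)(0 := f l)) (TVar 0), teval A ((\<lambda>_. w)(0 := f r)) (TVar 0)) \<in> Sigma0 \<Sigma> A"
    by (rule Sigma0I[OF disjI1[OF assms(1)] assms(2)]) (use assms(3) in simp)
  then have "(f l, f r) \<in> Sigma0 \<Sigma> A" by simp
  then show ?thesis using PR_sigma0 by (rule subsetD[rotated])
qed

lemma gamma_Gamma:
  assumes p: "p \<in> Omega A" and q: "q \<in> Omega A"
  shows "(pmul A (pom A (pmul A p q)) p, p) \<in> provable_rel GammaPI A"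
proof -
  let ?f = "substf A Bxy (gpq p q)"
  have g: "\<forall>b\<in>Bxy. gpq p q b \<in> Omega A" by (rule gpq_Omega[OF p q])
  have mem: "(Bxy, pmul Bxy (pom Bxy (pmul Bxy gx gy)) gx, gx) \<in> GammaPI" unfolding GammaPI_eq by simp
  have "(?f (pmul Bxy (pom Bxy (pmul Bxy gx gy)) gx), ?f gx) \<in> provable_rel GammaPI A"
    by (rule sigma0_pair[OF mem substf_cont_hom[OF g] p])
  moreover have "?f (pmul Bxy (pom Bxy (pmul Bxy gx gy)) gx) = pmul A (pom A (pmul A p q)) p"
    using gxy_Omega sub_gx[OF p q] sub_gy[OF p q]
    by (simp add: substf_pmul[OF g] substf_pom[OF g] pmul_Omega pom_Omega)
  ultimately show ?thesis using sub_gx[OF p q] by simp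
qed

lemma sigma_S1:
  assumes p: "p \<in> Omega A" and q: "q \<in> Omega A"
  shows "(pom A (pmul A (pmul A p q) p), pom A p) \<in> provable_rel SigmaPI A"
proof -
  let ?f = "substf A Bxy (gpq p q)"
  have g: "\<forall>b\<in>Bxy. gpq p q b \<in> Omega A" by (rule gpq_Omega[OF p q])
  have mem: "(Bxy, pom Bxy (pmul Bxy (pmul Bxy gx gy) gx), pom Bxy gx) \<in> SigmaPI" unfolding SigmaPI_eq by simp
  have "(?f (pom Bxy (pmul Bxy (pmul Bxy gx gy) gx)), ?f (pom Bxy gx)) \<in> provable_rel SigmaPI A"
    by (rule sigma0_pair[OF mem substf_cont_hom[OF g] p])
  moreover have "?f (pom Bxy (pmul Bxy (pmul Bxy gx gy) gx)) = pom A (pmul A (pmul A p q) p)"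
    using gxy_Omega sub_gx[OF p q] sub_gy[OF p q]
    by (simp add: substf_pmul[OF g] substf_pom[OF g] pmul_Omega pom_Omega)
  moreover have "?f (pom Bxy gx) = pom A p"
    using gxy_Omega sub_gx[OF p q] by (simp add: substf_pom[OF g])
  ultimately show ?thesis by simp
qed

lemma sigma_S2:
  assumes p: "p \<in> Omega A"
  shows "(pmul A (pom A p) p, p) \<in> provable_rel SigmaPI A"
proof -
  let ?f = "substf A Bxy (gpq p p)"
  have g: "\<forall>b\<in>Bxy. gpq p p b \<in> Omega A" by (rule gpq_Omega[OF p p])
  have mem: "(Bxy, pmul Bxy (pom Bxy gx) gx, gx) \<in> SigmaPI" unfolding SigmaPI_eq by simp
  have "(?f (pmul Bxy (pom Bxy gx) gx), ?f gx) \<in> provable_rel SigmaPI A"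
    by (rule sigma0_pair[OF mem substf_cont_hom[OF g] p])
  moreover have "?f (pmul Bxy (pom Bxy gx) gx) = pmul A (pom A p) p"
    using gxy_Omega sub_gx[OF p p] by (simp add: substf_pmul[OF g] substf_pom[OF g] pom_Omega)
  ultimately show ?thesis using sub_gx[OF p p] by simp
qed

lemma gamma_Sigma:
  assumes x: "x \<in> Omega A" and y: "y \<in> Omega A"
  shows "(pmul A (pom A (pmul A x y)) x, x) \<in> provable_rel SigmaPI A"
proof -
  let ?P = "provable_rel SigmaPI A"
  note sig = SigOm_SigmaPI
  define u where "u = pmul A x y"
  define w where "w = pmul A u x"
  define m where "m = pmul A (pmul A x (pom1 A w)) x"
  have uO: "u \<in> Omega A" unfolding u_def by (rule pmul_Omega[OF x y])
  have wO: "w \<in> Omega A" unfolding w_def by (rule pmul_Omega[OF uO x])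
  have puO: "pom A u \<in> Omega A" by (rule pom_Omega[OF uO])
  have pxO: "pom A x \<in> Omega A" by (rule pom_Omega[OF x])
  have pwO: "pom A w \<in> Omega A" by (rule pom_Omega[OF wO])
  have p1wO: "pom1 A w \<in> Omega A" by (rule pom1_Omega[OF wO])
  have xp1O: "pmul A x (pom1 A w) \<in> Omega A" by (rule pmul_Omega[OF x p1wO])
  have mO: "m \<in> Omega A" unfolding m_def by (rule pmul_Omega[OF xp1O x])
  have S1: "(pom A w, pom A x) \<in> ?P" unfolding w_def u_def by (rule sigma_S1[OF x y])
  have E0: "pmul A (pom A w) x = pmul A u m"
  proof -
    have "pom A w = pmul A w (pom1 A w)" using I2[OF wO] by simp
    also have "\<dots> = pmul A u (pmul A x (pom1 A w))" by (rule pmul_assoc[OF uO x p1wO, folded w_def])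
    finally have "pmul A (pom A w) x = pmul A (pmul A u (pmul A x (pom1 A w))) x" by simp
    also have "\<dots> = pmul A u m" unfolding m_def by (rule pmul_assoc[OF uO xp1O x])
    finally show ?thesis .
  qed
  have E1: "pmul A (pom A u) (pmul A (pom A w) x) = pmul A (pmul A (pom A u) u) m"
    unfolding E0 by (rule pmul_assoc[OF puO uO mO, symmetric])
  have st1: "(pmul A (pom A u) x, pmul A (pom A u) (pmul A (pom A x) x)) \<in> ?P"
    by (rule PR_lmul[OF sig PR_sym[OF sig sigma_S2[OF x]] puO])
  have st2: "(pmul A (pom A u) (pmul A (pom A x) x), pmul A (pom A u) (pmul A (pom A w) x)) \<in> ?P"
    by (rule PR_lmul[OF sig PR_rmul[OF sig PR_sym[OF sig S1] x] puO])
  have st3: "(pmul A (pmul A (pom A u) u) m, pmul A u m) \<in> ?P"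
    by (rule PR_rmul[OF sig sigma_S2[OF uO] mO])
  have st4: "(pmul A (pom A w) x, pmul A (pom A x) x) \<in> ?P"
    by (rule PR_rmul[OF sig S1 x])
  have st5: "(pmul A (pom A x) x, x) \<in> ?P" by (rule sigma_S2[OF x])
  have "(pmul A (pom A u) x, pmul A (pom A u) (pmul A (pom A w) x)) \<in> ?P" by (rule PR_transD[OF st1 st2])
  then have "(pmul A (pom A u) x, pmul A u m) \<in> ?P" using st3 unfolding E1 by (rule PR_transD)
  then have "(pmul A (pom A u) x, pmul A (pom A w) x) \<in> ?P" unfolding E0 .
  then have "(pmul A (pom A u) x, pmul A (pom A x) x) \<in> ?P" using st4 by (rule PR_transD)
  then have "(pmul A (pom A u) x, x) \<in> ?P" using st5 by (rule PR_transD)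
  then show ?thesis unfolding u_def .
qed

theorem theorem9p3:
  shows "h_strong SigmaPI \<and> h_strong GammaPI"
proof
  have m1: "(Bxy, pmul Bxy (pom Bxy gx) gx, gx) \<in> SigmaPI" unfolding SigmaPI_eq by simp
  show "h_strong SigmaPI"
    by (rule h_strong_gen[OF SigOm_SigmaPI m1 Lb_models_Sigma gamma_Sigma])
  have m2: "(Bxy, pmul Bxy (pom Bxy (pmul Bxy gx gy)) gx, gx) \<in> GammaPI" unfolding GammaPI_eq by simp
  show "h_strong GammaPI"
    by (rule h_strong_gen[OF SigOm_GammaPI m2 Lb_models_Gamma gamma_Gamma])
qed



end
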